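(* Let $S$ be a finite $p$-group and $\mathcal{A}$ a bifree $S$-algebra. Then $\mathcal{A}$ possesses an $(S,S)$-invariant $\mathcal{O}$-basis contained in $\mathcal{A}^\times$ if and only if for every subgroup $P\le S$ and every $\varphi\in\mathrm{Hom}_{\mathfrak{F}_S(\mathcal{A})}(P,S)$ we have $\mathcal{A}^\times\cap{}^\varphi\mathcal{A}^P\neq\emptyset$.
   Context: $\mathcal{O}$ is a complete local noetherian domain with maximal ideal $\mathfrak{m}$ and algebraically closed (hence infinite) residue field $k$ of characteristic $p$ (possibly $\mathcal{O}=k$). An interior $S$-algebra is an $\mathcal{O}$-free finite-rank $\mathcal{O}$-algebra $\mathcal{A}$ with a group homomorphism $S\to\mathcal{A}^\times$; $S\times S$ acts by $(s,t)a=sat^{-1}$. It is bifree if it has an $\mathcal{O}$-basis $Y$ with $sY=Y=Ys$ for all $s\in S$ (an $(S,S)$-invariant basis) on which the left and right $S$-actions are free. ${}^\varphi\mathcal{A}^P=\{a:\varphi(p)a=ap\ \forall p\in P\}$. For $U\le S\times S$, $\mathcal{A}(U)=\mathcal{A}^U/(\mathfrak{m}\mathcal{A}^U+\sum_{V<U}\mathrm{tr}_V^U\mathcal{A}^V)$; for injective $\varphi:P\to S$, $\mathcal{A}(\varphi)=\mathcal{A}(\Delta(\varphi,P))$ with $\Delta(\varphi,P)=\{(\varphi(p),p)\}$. $\mathfrak{F}_S(\mathcal{A})$ has objects the subgroups of $S$ and $\mathrm{Hom}(P,Q)=\{\varphi:P\to Q$ injective homomorphism$:\mathcal{A}(\varphi)\ne0\}$.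 *)

theory Defs
  imports "HOL-Algebra.Coset" "HOL-Computational_Algebra.Primes"
begin

definition oideal :: "'o::idom set \<Rightarrow> bool" where
  "oideal I \<longleftrightarrow> 0 \<in> I \<and> (\<forall>x\<in>I. \<forall>y\<in>I. x + y \<in> I) \<and> (\<forall>r x. x \<in> I \<longrightarrow> r * x \<in> I)"

definition igen :: "'o::idom set \<Rightarrow> 'o set" where
  "igen G = {x. \<exists>F c. finite F \<and> F \<subseteq> G \<and> x = (\<Sum>f\<in>F. c f * f)}"

definition maximal_oideal :: "'o::idom set \<Rightarrow> bool" where
  "maximal_oideal I \<longleftrightarrow> oideal I \<and> I \<noteq> UNIV \<and>
     (\<forall>J. oideal J \<and> I \<subseteq> J \<longrightarrow> J = I \<or> J = UNIV)"

fun ipow :: "'o::idom set \<Rightarrow> nat \<Rightarrow> 'o set" where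
  "ipow m 0 = UNIV"
| "ipow m (Suc n) = igen {a * b | a b. a \<in> m \<and> b \<in> ipow m n}"

text \<open>O is a complete local noetherian domain with maximal ideal m and algebraically
  closed residue field O/m of characteristic p.\<close>
definition standing_O :: "'o::idom set \<Rightarrow> nat \<Rightarrow> bool" where
  "standing_O m p \<longleftrightarrow>
     maximal_oideal m \<and> (\<forall>J::'o set. maximal_oideal J \<longrightarrow> J = m) \<and>
     (\<forall>I::'o set. oideal I \<longrightarrow> (\<exists>F. finite F \<and> I = igen F)) \<and>
     (\<Inter>n. ipow m n) = {0} \<and>
     (\<forall>x::nat \<Rightarrow> 'o. (\<forall>n. \<exists>N. \<forall>i\<ge>N. \<forall>j\<ge>N. x i - x j \<in> ipow m n) \<longrightarrow>
        (\<exists>L. \<forall>n. \<exists>N. \<forall>i\<ge>N. x i - L \<in> ipow m n)) \<and>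
     (\<forall>n::nat. n \<ge> 1 \<longrightarrow> (\<forall>c::nat \<Rightarrow> 'o. \<exists>x. x ^ n + (\<Sum>i<n. c i * x ^ i) \<in> m)) \<and>
     prime p \<and> of_nat p \<in> m"

definition oalg :: "('o::idom \<Rightarrow> 'a::{ring,monoid_mult} \<Rightarrow> 'a) \<Rightarrow> bool" where
  "oalg smult \<longleftrightarrow>
     (\<forall>r x y. smult r (x + y) = smult r x + smult r y) \<and>
     (\<forall>r s x. smult (r + s) x = smult r x + smult s x) \<and>
     (\<forall>r s x. smult (r * s) x = smult r (smult s x)) \<and>
     (\<forall>x. smult 1 x = x) \<and>
     (\<forall>r x y. smult r (x * y) = smult r x * y) \<and>
     (\<forall>r x y. smult r (x * y) = x * smult r y)"

definition ospan :: "('o::idom \<Rightarrow> 'a::{ring,monoid_mult} \<Rightarrow> 'a) \<Rightarrow> 'a set \<Rightarrow> 'a set" where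
  "ospan smult X = {x. \<exists>F c. finite F \<and> F \<subseteq> X \<and> x = (\<Sum>b\<in>F. smult (c b) b)}"

definition is_obasis :: "('o::idom \<Rightarrow> 'a::{ring,monoid_mult} \<Rightarrow> 'a) \<Rightarrow> 'a set \<Rightarrow> bool" where
  "is_obasis smult Y \<longleftrightarrow> finite Y \<and>
     (\<forall>c. (\<Sum>y\<in>Y. smult (c y) y) = 0 \<longrightarrow> (\<forall>y\<in>Y. c y = 0)) \<and>
     (\<forall>a. \<exists>c. a = (\<Sum>y\<in>Y. smult (c y) y))"

definition unitsA :: "'a::{ring,monoid_mult} set" where
  "unitsA = {a. \<exists>b. a * b = 1 \<and> b * a = 1}"

definition interior_alg ::
  "('o::idom \<Rightarrow> 'a::{ring,monoid_mult} \<Rightarrow> 'a) \<Rightarrow> ('g,'b) monoid_scheme \<Rightarrow> ('g \<Rightarrow> 'a) \<Rightarrow> bool" where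
  "interior_alg smult S \<sigma> \<longleftrightarrow> oalg smult \<and> (\<exists>Y. is_obasis smult Y) \<and>
     \<sigma> \<one>\<^bsub>S\<^esub> = 1 \<and>
     (\<forall>s\<in>carrier S. \<forall>t\<in>carrier S. \<sigma> (s \<otimes>\<^bsub>S\<^esub> t) = \<sigma> s * \<sigma> t)"

definition SS_invariant :: "('g,'b) monoid_scheme \<Rightarrow> ('g \<Rightarrow> 'a::{ring,monoid_mult}) \<Rightarrow> 'a set \<Rightarrow> bool" where
  "SS_invariant S \<sigma> Y \<longleftrightarrow>
     (\<forall>s\<in>carrier S. (\<lambda>y. \<sigma> s * y) ` Y = Y \<and> (\<lambda>y. y * \<sigma> s) ` Y = Y)"

definition bifree ::
  "('o::idom \<Rightarrow> 'a::{ring,monoid_mult} \<Rightarrow> 'a) \<Rightarrow> ('g,'b) monoid_scheme \<Rightarrow> ('g \<Rightarrow> 'a) \<Rightarrow> bool" where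
  "bifree smult S \<sigma> \<longleftrightarrow> (\<exists>Y. is_obasis smult Y \<and> SS_invariant S \<sigma> Y \<and>
     (\<forall>s\<in>carrier S. \<forall>y\<in>Y. \<sigma> s * y = y \<longrightarrow> s = \<one>\<^bsub>S\<^esub>) \<and>
     (\<forall>s\<in>carrier S. \<forall>y\<in>Y. y * \<sigma> s = y \<longrightarrow> s = \<one>\<^bsub>S\<^esub>))"

definition act :: "('g,'b) monoid_scheme \<Rightarrow> ('g \<Rightarrow> 'a::{ring,monoid_mult}) \<Rightarrow> 'g \<times> 'g \<Rightarrow> 'a \<Rightarrow> 'a" where
  "act S \<sigma> u a = \<sigma> (fst u) * a * \<sigma> (inv\<^bsub>S\<^esub> (snd u))"

definition fixpts :: "('g,'b) monoid_scheme \<Rightarrow> ('g \<Rightarrow> 'a::{ring,monoid_mult}) \<Rightarrow> ('g \<times> 'g) set \<Rightarrow> 'a set" where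
  "fixpts S \<sigma> U = {a. \<forall>u\<in>U. act S \<sigma> u a = a}"

definition trace ::
  "('g,'b) monoid_scheme \<Rightarrow> ('g \<Rightarrow> 'a::{ring,monoid_mult}) \<Rightarrow> ('g \<times> 'g) set \<Rightarrow> ('g \<times> 'g) set \<Rightarrow> 'a \<Rightarrow> 'a" where
  "trace S \<sigma> U V a = (\<Sum>C\<in>(\<lambda>u. u <#\<^bsub>S \<times>\<times> S\<^esub> V) ` U. act S \<sigma> (SOME u. u \<in> C) a)"

text \<open>A(U) \<noteq> 0, i.e. A^U is not contained in m A^U + sum of tr_V^U(A^V), V < U.\<close>
definition brauer_nonzero ::
  "('o::idom \<Rightarrow> 'a::{ring,monoid_mult} \<Rightarrow> 'a) \<Rightarrow> 'o set \<Rightarrow> ('g,'b) monoid_scheme \<Rightarrow> ('g \<Rightarrow> 'a)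
     \<Rightarrow> ('g \<times> 'g) set \<Rightarrow> bool" where
  "brauer_nonzero smult m S \<sigma> U \<longleftrightarrow>
     \<not> (fixpts S \<sigma> U \<subseteq> ospan smult
          ({smult r a | r a. r \<in> m \<and> a \<in> fixpts S \<sigma> U} \<union>
           (\<Union>V\<in>{V. subgroup V (S \<times>\<times> S) \<and> V \<subset> U}. trace S \<sigma> U V ` fixpts S \<sigma> V)))"

definition Delta :: "('g \<Rightarrow> 'g) \<Rightarrow> 'g set \<Rightarrow> ('g \<times> 'g) set" where
  "Delta \<phi> P = {(\<phi> x, x) | x. x \<in> P}"

definition fusion_hom ::
  "('o::idom \<Rightarrow> 'a::{ring,monoid_mult} \<Rightarrow> 'a) \<Rightarrow> 'o set \<Rightarrow> ('g,'b) monoid_scheme \<Rightarrow> ('g \<Rightarrow> 'a)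
     \<Rightarrow> 'g set \<Rightarrow> ('g \<Rightarrow> 'g) set" where
  "fusion_hom smult m S \<sigma> P = {\<phi>. \<phi> \<in> hom (S\<lparr>carrier := P\<rparr>) S \<and> inj_on \<phi> P \<and>
       brauer_nonzero smult m S \<sigma> (Delta \<phi> P)}"

definition twfix :: "('g,'b) monoid_scheme \<Rightarrow> ('g \<Rightarrow> 'a::{ring,monoid_mult}) \<Rightarrow> ('g \<Rightarrow> 'g) \<Rightarrow> 'g set \<Rightarrow> 'a set" where
  "twfix S \<sigma> \<phi> P = {a. \<forall>x\<in>P. \<sigma> (\<phi> x) * a = a * \<sigma> x}"

end

theory Submission
  imports Defs "Jordan_Normal_Form.Char_Poly" "HOL-Algebra.Left_Coset"
begin

locale oalgebra =
  fixes smult :: "'o::idom \<Rightarrow> 'a::{ring,monoid_mult} \<Rightarrow> 'a"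
  assumes oalg: "oalg smult"
begin

lemma sm_add: "smult r (x + y) = smult r x + smult r y"
  and sm_addl: "smult (r + s) x = smult r x + smult s x"
  and sm_assoc: "smult (r * s) x = smult r (smult s x)"
  and sm_one: "smult 1 x = x"
  and sm_multl: "smult r (x * y) = smult r x * y"
  and sm_multr: "smult r (x * y) = x * smult r y"
  using oalg unfolding oalg_def by auto

lemma sm_zero[simp]: "smult r 0 = 0"
  using sm_add[of r 0 0] by simp

lemma sm_zerol[simp]: "smult 0 x = 0"
  using sm_addl[of 0 0 x] by simp

lemma sm_neg: "smult r (- x) = - smult r x"
proof -
  have "smult r x + smult r (-x) = 0" using sm_add[of r x "-x"] by simp
  then show ?thesis by (rule add.inverse_unique[symmetric])
qed

lemma sm_negl: "smult (- r) x = - smult r x"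
proof -
  have "smult r x + smult (-r) x = 0" using sm_addl[of r "-r" x] by simp
  then show ?thesis by (rule add.inverse_unique[symmetric])
qed

lemma sm_diff: "smult r (x - y) = smult r x - smult r y"
  using sm_add[of r x "-y"] sm_neg by simp

lemma sm_diffl: "smult (r - s) x = smult r x - smult s x"
  using sm_addl[of r "-s" x] sm_negl by simp

lemma sm_sum: "smult r (sum f A) = (\<Sum>i\<in>A. smult r (f i))"
  by (induct A rule: infinite_finite_induct) (auto simp: sm_add)

lemma sm_suml: "smult (sum f A) x = (\<Sum>i\<in>A. smult (f i) x)"
  by (induct A rule: infinite_finite_induct) (auto simp: sm_addl)

lemma sm_1l: "smult r x = smult r 1 * x"
  using sm_multl[of r 1 x] by simp

lemma sm_1r: "smult r x = x * smult r 1"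
  using sm_multr[of r x 1] by simp

lemma sm_mult_comm: "smult r 1 * x = x * smult r 1"
proof -
  have "smult r 1 * x = smult r (1 * x)" by (rule sm_multl[symmetric])
  also have "\<dots> = smult r (x * 1)" by simp
  also have "\<dots> = x * smult r 1" by (rule sm_multr)
  finally show ?thesis .
qed

lemma sm_smult_mult: "smult r x * smult s y = smult (r * s) (x * y)"
proof -
  have "smult r x * smult s y = smult r (x * smult s y)" by (rule sm_multl[symmetric])
  also have "\<dots> = smult r (smult s (x * y))" by (simp add: sm_multr[symmetric])
  finally show ?thesis by (simp add: sm_assoc)
qed

lemma ospan_sum_rep:
  assumes "finite X"
  shows "ospan smult X = {x. \<exists>c. x = (\<Sum>b\<in>X. smult (c b) b)}"
proof
  show "ospan smult X \<subseteq> {x. \<exists>c. x = (\<Sum>b\<in>X. smult (c b) b)}"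
  proof
    fix x assume "x \<in> ospan smult X"
    then obtain F c where F: "finite F" "F \<subseteq> X" "x = (\<Sum>b\<in>F. smult (c b) b)"
      unfolding ospan_def by auto
    let ?c = "\<lambda>b. if b \<in> F then c b else 0"
    have "(\<Sum>b\<in>X. smult (?c b) b) = (\<Sum>b\<in>F. smult (?c b) b)"
      by (rule sum.mono_neutral_right) (use F assms in auto)
    also have "\<dots> = x" using F by simp
    finally show "x \<in> {x. \<exists>c. x = (\<Sum>b\<in>X. smult (c b) b)}" by auto
  qed
  show "{x. \<exists>c. x = (\<Sum>b\<in>X. smult (c b) b)} \<subseteq> ospan smult X"
    using assms unfolding ospan_def by blast
qed

lemma ospan_zero: "0 \<in> ospan smult X"
  unfolding ospan_def by (rule CollectI, rule exI[of _ "{}"]) auto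

lemma ospan_base: "x \<in> X \<Longrightarrow> x \<in> ospan smult X"
  unfolding ospan_def
  by (rule CollectI, rule exI[of _ "{x}"], rule exI[of _ "\<lambda>_. 1"]) (auto simp: sm_one)

lemma ospan_add:
  assumes "x \<in> ospan smult X" "y \<in> ospan smult X"
  shows "x + y \<in> ospan smult X"
proof -
  obtain F c where F: "finite F" "F \<subseteq> X" "x = (\<Sum>b\<in>F. smult (c b) b)"
    using assms(1) unfolding ospan_def by auto
  obtain G d where G: "finite G" "G \<subseteq> X" "y = (\<Sum>b\<in>G. smult (d b) b)"
    using assms(2) unfolding ospan_def by auto
  let ?c = "\<lambda>b. if b \<in> F then c b else 0"
  let ?d = "\<lambda>b. if b \<in> G then d b else 0"
  have "(\<Sum>b\<in>F \<union> G. smult (?c b) b) = (\<Sum>b\<in>F. smult (?c b) b)"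
    by (rule sum.mono_neutral_right) (use F G in auto)
  then have "x = (\<Sum>b\<in>F \<union> G. smult (?c b) b)" using F by simp
  moreover have "(\<Sum>b\<in>F \<union> G. smult (?d b) b) = (\<Sum>b\<in>G. smult (?d b) b)"
    by (rule sum.mono_neutral_right) (use F G in auto)
  then have "y = (\<Sum>b\<in>F \<union> G. smult (?d b) b)" using G by simp
  ultimately have "x + y = (\<Sum>b\<in>F \<union> G. smult (?c b + ?d b) b)"
    by (simp add: sum.distrib sm_addl)
  then show ?thesis unfolding ospan_def using F G
    by (intro CollectI exI[of _ "F \<union> G"] exI[of _ "\<lambda>b. ?c b + ?d b"]) auto
qed

lemma ospan_smult:
  assumes "x \<in> ospan smult X"
  shows "smult r x \<in> ospan smult X"
proof -
  obtain F c where F: "finite F" "F \<subseteq> X" "x = (\<Sum>b\<in>F. smult (c b) b)"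
    using assms(1) unfolding ospan_def by auto
  then have "smult r x = (\<Sum>b\<in>F. smult (r * c b) b)"
    by (simp add: sm_sum sm_assoc)
  then show ?thesis unfolding ospan_def using F
    by (intro CollectI exI[of _ F] exI[of _ "\<lambda>b. r * c b"]) auto
qed

lemma ospan_sum:
  "(\<And>i. i \<in> I \<Longrightarrow> f i \<in> ospan smult X) \<Longrightarrow> sum f I \<in> ospan smult X"
  by (induct I rule: infinite_finite_induct) (auto simp: ospan_zero ospan_add)

lemma ospan_mono: "X \<subseteq> X' \<Longrightarrow> ospan smult X \<subseteq> ospan smult X'"
  unfolding ospan_def by blast

end

context oalgebra begin

definition coord :: "'a set \<Rightarrow> 'a \<Rightarrow> 'a \<Rightarrow> 'o" where
  "coord Z a = (SOME c. a = (\<Sum>y\<in>Z. smult (c y) y))"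

lemma coord_repr: "is_obasis smult Z \<Longrightarrow> a = (\<Sum>y\<in>Z. smult (coord Z a y) y)"
proof -
  assume "is_obasis smult Z"
  then have "\<exists>c. a = (\<Sum>y\<in>Z. smult (c y) y)" unfolding is_obasis_def by blast
  then show ?thesis unfolding coord_def by (rule someI_ex[of "\<lambda>c. a = (\<Sum>y\<in>Z. smult (c y) y)"])
qed

lemma basis_indep: "is_obasis smult Z \<Longrightarrow> (\<Sum>y\<in>Z. smult (c y) y) = 0 \<Longrightarrow> y \<in> Z \<Longrightarrow> c y = 0"
  unfolding is_obasis_def by blast

lemma basis_finite: "is_obasis smult Z \<Longrightarrow> finite Z"
  unfolding is_obasis_def by blast

lemma coord_uniq:
  assumes B: "is_obasis smult Z" and a: "a = (\<Sum>y\<in>Z. smult (c y) y)" and w: "w \<in> Z"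
  shows "coord Z a w = c w"
proof -
  have "(\<Sum>y\<in>Z. smult (coord Z a y - c y) y) = 0"
    using coord_repr[OF B, of a] a by (simp add: sm_diffl sum_subtractf)
  from basis_indep[OF B this w] show ?thesis by simp
qed

lemma coord_eqI:
  assumes B: "is_obasis smult Z" and "\<And>w. w \<in> Z \<Longrightarrow> coord Z a w = coord Z b w"
  shows "a = b"
proof -
  have "(\<Sum>y\<in>Z. smult (coord Z a y) y) = (\<Sum>y\<in>Z. smult (coord Z b y) y)"
    using assms(2) by (intro sum.cong) auto
  then show ?thesis using coord_repr[OF B, of a] coord_repr[OF B, of b] by simp
qed

lemma coord_add: "is_obasis smult Z \<Longrightarrow> w \<in> Z \<Longrightarrow> coord Z (a + b) w = coord Z a w + coord Z b w"
  by (rule coord_uniq[of Z "a+b" "\<lambda>y. coord Z a y + coord Z b y"])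
     (auto simp: sm_addl sum.distrib coord_repr[symmetric])

lemma coord_smult: "is_obasis smult Z \<Longrightarrow> w \<in> Z \<Longrightarrow> coord Z (smult r a) w = r * coord Z a w"
proof -
  assume B: "is_obasis smult Z" and w: "w \<in> Z"
  have "smult r a = smult r (\<Sum>y\<in>Z. smult (coord Z a y) y)"
    using coord_repr[OF B, of a] by (rule arg_cong)
  also have "\<dots> = (\<Sum>y\<in>Z. smult (r * coord Z a y) y)" by (simp add: sm_sum sm_assoc)
  finally show ?thesis by (rule coord_uniq[OF B _ w])
qed

lemma coord_zero: "is_obasis smult Z \<Longrightarrow> w \<in> Z \<Longrightarrow> coord Z 0 w = 0"
  by (rule coord_uniq[of Z _ "\<lambda>y. 0"]) auto

lemma coord_neg: "is_obasis smult Z \<Longrightarrow> w \<in> Z \<Longrightarrow> coord Z (- a) w = - coord Z a w"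
proof -
  assume "is_obasis smult Z" "w \<in> Z"
  then have "coord Z a w + coord Z (- a) w = 0" using coord_add[of Z w a "-a"] coord_zero[of Z w] by simp
  then show ?thesis by (rule add.inverse_unique[symmetric])
qed

lemma coord_diff: "is_obasis smult Z \<Longrightarrow> w \<in> Z \<Longrightarrow> coord Z (a - b) w = coord Z a w - coord Z b w"
  using coord_add[of Z w a "-b"] coord_neg[of Z w b] by simp

lemma coord_sum: "is_obasis smult Z \<Longrightarrow> w \<in> Z \<Longrightarrow> coord Z (sum f I) w = (\<Sum>i\<in>I. coord Z (f i) w)"
  by (induct I rule: infinite_finite_induct) (auto simp: coord_zero coord_add)

lemma coord_base: "is_obasis smult Z \<Longrightarrow> v \<in> Z \<Longrightarrow> w \<in> Z \<Longrightarrow> coord Z v w = (if w = v then 1 else 0)"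
proof -
  assume B: "is_obasis smult Z" and v: "v \<in> Z" and w: "w \<in> Z"
  have "(\<Sum>y\<in>Z. smult (if y = v then 1 else 0) y) = (\<Sum>y\<in>Z. if y = v then y else 0)"
    by (rule sum.cong) (auto simp: sm_one)
  also have "\<dots> = v" using basis_finite[OF B] v by simp
  finally have "v = (\<Sum>y\<in>Z. smult (if y = v then 1 else 0) y)" by simp
  from coord_uniq[OF B this w] show ?thesis .
qed

lemma coord_lin: "is_obasis smult Z \<Longrightarrow> w \<in> Z \<Longrightarrow>
  coord Z (\<Sum>i\<in>I. smult (d i) (f i)) w = (\<Sum>i\<in>I. d i * coord Z (f i) w)"
  by (simp add: coord_sum coord_smult)

lemma basis_span: "is_obasis smult Z \<Longrightarrow> a \<in> ospan smult Z"
  using coord_repr[of Z a] ospan_sum_rep[OF basis_finite, of Z] by auto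

end

locale localO =
  fixes m :: "'o::idom set" and p :: nat
  assumes O: "standing_O m p"
begin

lemma m_max: "maximal_oideal m" using O unfolding standing_O_def by (elim conjE)
lemma m_unique: "maximal_oideal J \<Longrightarrow> J = m"
  using O unfolding standing_O_def by (elim conjE) (erule allE, erule mp)
lemma m_ideal: "oideal m" using m_max unfolding maximal_oideal_def by blast
lemma m_zero: "0 \<in> m" using m_ideal unfolding oideal_def by blast
lemma m_add: "x \<in> m \<Longrightarrow> y \<in> m \<Longrightarrow> x + y \<in> m" using m_ideal unfolding oideal_def by blast
lemma m_multl: "x \<in> m \<Longrightarrow> r * x \<in> m" using m_ideal unfolding oideal_def by blast
lemma m_multr: "x \<in> m \<Longrightarrow> x * r \<in> m" using m_multl[of x r] by (simp add: mult.commute)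
lemma m_neg: "x \<in> m \<Longrightarrow> - x \<in> m" using m_multl[of x "-1"] by simp
lemma m_diff: "x \<in> m \<Longrightarrow> y \<in> m \<Longrightarrow> x - y \<in> m" using m_add[of x "-y"] m_neg by simp
lemma m_sum: "(\<And>i. i \<in> I \<Longrightarrow> f i \<in> m) \<Longrightarrow> sum f I \<in> m"
  by (induct I rule: infinite_finite_induct) (auto simp: m_zero m_add)
lemma one_notin_m: "1 \<notin> m"
proof
  assume "1 \<in> m"
  then have "x \<in> m" for x using m_multl[of 1 x] by simp
  then show False using m_max unfolding maximal_oideal_def by blast
qed
lemma p_in_m: "of_nat p \<in> m" using O unfolding standing_O_def by (elim conjE)
lemma p_prime: "prime p" using O unfolding standing_O_def by (elim conjE)
lemma alg_closed: "n \<ge> 1 \<Longrightarrow> \<exists>x. x ^ n + (\<Sum>i<n. c i * x ^ i) \<in> m"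
  using O unfolding standing_O_def by (elim conjE) (erule allE[of _ n], erule impE, assumption, erule allE[of _ c])

lemma m_prime:
  assumes "x * y \<in> m" "x \<notin> m" shows "y \<in> m"
proof -
  define J where "J = {a + x * r | a r. a \<in> m}"
  have "oideal J" unfolding oideal_def J_def
  proof (intro conjI ballI allI impI)
    have "0 = 0 + x * 0" by simp
    then show "0 \<in> {a + x * r |a r. a \<in> m}" using m_zero by blast
    fix u v assume "u \<in> {a + x * r |a r. a \<in> m}" "v \<in> {a + x * r |a r. a \<in> m}"
    then obtain a1 r1 a2 r2 where "u = a1 + x * r1" "v = a2 + x * r2" "a1 \<in> m" "a2 \<in> m" by auto
    then have "u + v = (a1 + a2) + x * (r1 + r2)" "a1 + a2 \<in> m" by (simp_all add: m_add algebra_simps)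
    then show "u + v \<in> {a + x * r |a r. a \<in> m}" by blast
  next
    fix s u assume "u \<in> {a + x * r |a r. a \<in> m}"
    then obtain a1 r1 where "u = a1 + x * r1" "a1 \<in> m" by auto
    then have "s * u = (s * a1) + x * (s * r1)" "s * a1 \<in> m" by (simp add: algebra_simps, simp add: m_multl)
    then show "s * u \<in> {a + x * r |a r. a \<in> m}" by blast
  qed
  moreover have "m \<subseteq> J" unfolding J_def
  proof
    fix z assume "z \<in> m" moreover have "z = z + x * 0" by simp
    ultimately show "z \<in> {a + x * r |a r. a \<in> m}" by blast
  qed
  moreover have "x \<in> J" unfolding J_def
  proof -
    have "x = 0 + x * 1" by simp
    then show "x \<in> {a + x * r |a r. a \<in> m}" using m_zero by blast
  qed
  ultimately have "J = UNIV" using m_max assms(2) unfolding maximal_oideal_def by blast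
  then obtain a r where "1 = a + x * r" "a \<in> m" unfolding J_def by blast
  then have "y = (a + x * r) * y" by simp
  also have "\<dots> = a * y + (x * y) * r" by (simp add: algebra_simps)
  finally have "y = a * y + (x * y) * r" .
  moreover have "a * y + (x * y) * r \<in> m" using m_add m_multr `a \<in> m` assms(1) by blast
  ultimately show ?thesis by simp
qed

lemma m_prime': "x * y \<in> m \<Longrightarrow> x \<in> m \<or> y \<in> m" using m_prime by blast

lemma notin_m_unit:
  assumes c: "c \<notin> m" shows "\<exists>d. c * d = 1"
proof (rule ccontr)
  assume nu: "\<not> (\<exists>d. c * d = 1)"
  define I where "I = {c * r | r. True}"
  define \<A> where "\<A> = {J. oideal J \<and> I \<subseteq> J \<and> 1 \<notin> J}"
  have "oideal I" unfolding oideal_def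
  proof (intro conjI ballI allI impI)
    show "0 \<in> I" unfolding I_def by (rule CollectI, rule exI[of _ 0]) simp
    fix x y assume "x \<in> I" "y \<in> I"
    then obtain r1 r2 where "x = c * r1" "y = c * r2" unfolding I_def by blast
    then have "x + y = c * (r1 + r2)" by (simp add: distrib_left)
    then show "x + y \<in> I" unfolding I_def by blast
  next
    fix s x assume "x \<in> I"
    then obtain r1 where "x = c * r1" unfolding I_def by blast
    then have "s * x = c * (s * r1)" by (simp add: mult.left_commute)
    then show "s * x \<in> I" unfolding I_def by blast
  qed
  moreover have "1 \<notin> I" using nu unfolding I_def by auto
  ultimately have IA: "I \<in> \<A>" unfolding \<A>_def by auto
  have "\<exists>M\<in>\<A>. \<forall>X\<in>\<A>. M \<subseteq> X \<longrightarrow> X = M"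
  proof (rule subset_Zorn_nonempty)
    show "\<A> \<noteq> {}" using IA by auto
    fix C assume C: "C \<noteq> {}" "subset.chain \<A> C"
    show "\<Union> C \<in> \<A>" unfolding \<A>_def
    proof (intro CollectI conjI)
      have CA: "C \<subseteq> \<A>" using C(2) unfolding subset.chain_def by auto
      show "I \<subseteq> \<Union> C" using C CA unfolding \<A>_def by auto
      show "1 \<notin> \<Union> C" using CA unfolding \<A>_def by auto
      show "oideal (\<Union> C)" unfolding oideal_def
      proof (intro conjI ballI allI impI)
        show "0 \<in> \<Union> C" using C CA unfolding \<A>_def oideal_def by blast
        fix x y assume "x \<in> \<Union> C" "y \<in> \<Union> C"
        then obtain X Y where XY: "X \<in> C" "Y \<in> C" "x \<in> X" "y \<in> Y" by auto
        then have "X \<subseteq> Y \<or> Y \<subseteq> X" using C(2) unfolding subset.chain_def by auto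
        then show "x + y \<in> \<Union> C" using XY CA unfolding \<A>_def oideal_def by blast
      next
        fix r x assume "x \<in> \<Union> C"
        then show "r * x \<in> \<Union> C" using CA unfolding \<A>_def oideal_def by blast
      qed
    qed
  qed
  then obtain M where M: "M \<in> \<A>" "\<And>X. X \<in> \<A> \<Longrightarrow> M \<subseteq> X \<Longrightarrow> X = M" by blast
  have "maximal_oideal M" unfolding maximal_oideal_def
  proof (intro conjI allI impI)
    show "oideal M" using M unfolding \<A>_def by auto
    show "M \<noteq> UNIV" using M unfolding \<A>_def by auto
    fix J assume J: "oideal J \<and> M \<subseteq> J"
    show "J = M \<or> J = UNIV"
    proof (cases "1 \<in> J")
      case True
      then have "x \<in> J" for x using J unfolding oideal_def by (metis mult_1_right)
      then show ?thesis by auto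
    next
      case False
      then have "J \<in> \<A>" using J M unfolding \<A>_def by auto
      then show ?thesis using M J by auto
    qed
  qed
  then have "M = m" by (rule m_unique)
  moreover have "c \<in> M" using M unfolding \<A>_def I_def by (auto intro: exI[of _ 1])
  ultimately show False using c by simp
qed

end

context localO begin

lemma prod_in_m:
  assumes "finite F" "a \<in> F" "f a \<in> m" shows "prod f F \<in> m"
proof -
  have "prod f F = f a * prod f (F - {a})" using assms by (simp add: prod.remove)
  then show ?thesis using assms m_multr by simp
qed

lemma infinite_residues:
  assumes F: "finite F" shows "\<exists>x. \<forall>a\<in>F. x - a \<notin> m"
proof -
  define F' where "F' = insert 0 F"
  have F': "finite F'" "F' \<noteq> {}" using F unfolding F'_def by auto
  define n where "n = card F'"
  have n1: "n \<ge> 1" using F' unfolding n_def by (simp add: Suc_leI card_gt_0_iff)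
  define q where "q = (\<Prod>a\<in>F'. [:-a, 1:])"
  define h where "h = q + 1"
  have dq: "degree q = n" unfolding q_def n_def
    by (subst degree_prod_eq_sum_degree) auto
  have lq: "lead_coeff q = 1" unfolding q_def by (simp add: lead_coeff_prod)
  have dh: "degree h = n" unfolding h_def using dq n1 by (subst degree_add_eq_left) auto
  have ch: "coeff h n = 1" unfolding h_def using lq dq n1 by simp
  obtain x where x: "x ^ n + (\<Sum>i<n. coeff h i * x ^ i) \<in> m" using alg_closed[OF n1] by blast
  have "poly h x = (\<Sum>i\<le>n. coeff h i * x ^ i)" using poly_altdef[of h x] dh by simp
  also have "\<dots> = x ^ n + (\<Sum>i<n. coeff h i * x ^ i)" using ch by (simp add: lessThan_Suc_atMost[symmetric])
  finally have hx: "poly h x \<in> m" using x by simp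
  show ?thesis
  proof (intro exI ballI)
    fix a assume a: "a \<in> F"
    show "x - a \<notin> m"
    proof
      assume "x - a \<in> m"
      then have "(\<Prod>b\<in>F'. x - b) \<in> m" using prod_in_m[OF F'(1), of a "\<lambda>b. x - b"] a unfolding F'_def by auto
      moreover have "poly h x = (\<Prod>b\<in>F'. x - b) + 1" unfolding h_def q_def by (simp add: poly_prod)
      ultimately have "1 \<in> m" using hx m_diff by (metis add_diff_cancel_left')
      then show False using one_notin_m by simp
    qed
  qed
qed

lemma coeff_linear_mult_m:
  assumes "\<forall>i. coeff g i \<in> m" shows "coeff ([:-a, 1:] * g) i \<in> m"
proof -
  have "[:-a, 1:] * g = Polynomial.smult (-a) g + pCons 0 g" by simp
  then have eq: "coeff ([:-a, 1:] * g) i = - a * coeff g i + coeff (pCons 0 g) i" by simp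
  have h2: "coeff (pCons 0 g) i \<in> m" using assms m_zero by (cases i) auto
  have h1: "- a * coeff g i \<in> m" using assms m_multl by blast
  show ?thesis unfolding eq by (rule m_add[OF h1 h2])
qed

lemma roots_mod_m:
  fixes f :: "'o poly"
  assumes "\<exists>i. coeff f i \<notin> m"
  shows "\<exists>R. finite R \<and> (\<forall>x. poly f x \<in> m \<longrightarrow> (\<exists>r\<in>R. x - r \<in> m))"
  using assms
proof (induction "degree f" arbitrary: f rule: less_induct)
  case less
  show ?case
  proof (cases "\<exists>a. poly f a \<in> m")
    case False then show ?thesis by (intro exI[of _ "{}"]) auto
  next
    case True
    then obtain a where a: "poly f a \<in> m" by blast
    define c where "c = poly f a"
    have "poly (f - [:c:]) a = 0" unfolding c_def by simp
    then have "[:-a, 1:] dvd (f - [:c:])" using poly_eq_0_iff_dvd by blast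
    then obtain g where g: "f - [:c:] = [:-a, 1:] * g" by (elim dvdE)
    then have fg: "f = [:-a, 1:] * g + [:c:]" by (simp add: algebra_simps)
    have gm: "\<exists>i. coeff g i \<notin> m"
    proof (rule ccontr)
      assume "\<not> (\<exists>i. coeff g i \<notin> m)"
      then have "\<forall>i. coeff g i \<in> m" by blast
      have "coeff f i \<in> m" for i
      proof -
        have "coeff f i = coeff ([:-a, 1:] * g + [:c:]) i" using fg by (rule arg_cong)
        then have eq: "coeff f i = coeff ([:-a, 1:] * g) i + coeff [:c:] i" by (simp only: coeff_add)
        have "coeff [:c:] i \<in> m" using a m_zero unfolding c_def by (cases i) auto
        then show ?thesis unfolding eq using coeff_linear_mult_m[of g a i] \<open>\<forall>i. coeff g i \<in> m\<close> m_add by blast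
      qed
      then show False using less.prems by blast
    qed
    then have g0: "g \<noteq> 0" using m_zero by auto
    have dlin: "degree ([:-a, 1:] * g) = degree g + 1" using g0 by (subst degree_mult_eq) auto
    have "degree f = degree g + 1" unfolding fg using dlin by (subst degree_add_eq_left) auto
    then have "degree g < degree f" by simp
    from less.hyps[OF this gm] obtain R where R: "finite R" "\<forall>x. poly g x \<in> m \<longrightarrow> (\<exists>r\<in>R. x - r \<in> m)" by blast
    show ?thesis
    proof (intro exI[of _ "insert a R"] conjI allI impI)
      show "finite (insert a R)" using R by simp
      fix x assume "poly f x \<in> m"
      moreover have "poly f x = (x - a) * poly g x + c" unfolding fg by (simp add: algebra_simps)
      ultimately have "(x - a) * poly g x \<in> m" using a m_diff unfolding c_def by (metis add_diff_cancel_right')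
      then have "x - a \<in> m \<or> poly g x \<in> m" by (rule m_prime')
      then show "\<exists>r\<in>insert a R. x - r \<in> m" using R by auto
    qed
  qed
qed

lemma eval_hom: "comm_ring_hom (\<lambda>q. poly q (\<mu>::'o))"
  by unfold_locales (auto simp: poly_mult)

definition pmat :: "'o mat \<Rightarrow> 'o mat \<Rightarrow> 'o poly mat" where
  "pmat A B = mat (dim_row A) (dim_col A) (\<lambda>ij. [:B $$ ij, A $$ ij:])"

lemma pmat_eval:
  assumes "A \<in> carrier_mat n n" "B \<in> carrier_mat n n"
  shows "poly (det (pmat A B)) \<mu> = det (\<mu> \<cdot>\<^sub>m A + B)"
proof -
  have "map_mat (\<lambda>q. poly q \<mu>) (pmat A B) = \<mu> \<cdot>\<^sub>m A + B"
    by (rule eq_matI) (use assms in \<open>auto simp: pmat_def algebra_simps\<close>)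
  then show ?thesis using comm_ring_hom.hom_det[OF eval_hom, of \<mu> "pmat A B"] by simp
qed

lemma inv_of_det:
  assumes M: "M \<in> carrier_mat n n" and d: "det M \<notin> m"
  shows "\<exists>M'. M' \<in> carrier_mat n n \<and> M * M' = 1\<^sub>m n \<and> M' * M = 1\<^sub>m n"
proof -
  obtain e where e: "det M * e = 1" using notin_m_unit[OF d] by blast
  define M' where "M' = e \<cdot>\<^sub>m adj_mat M"
  have aM: "adj_mat M \<in> carrier_mat n n" using adj_mat[OF M] by blast
  have "M * M' = e \<cdot>\<^sub>m (M * adj_mat M)" unfolding M'_def using M aM by (simp add: mult_smult_distrib)
  also have "\<dots> = 1\<^sub>m n" using adj_mat(2)[OF M] e by (intro eq_matI) (auto simp: mult.commute)
  finally have 1: "M * M' = 1\<^sub>m n" .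
  have "M' * M = e \<cdot>\<^sub>m (adj_mat M * M)" unfolding M'_def using M aM by (simp add: mult_smult_assoc_mat)
  also have "\<dots> = 1\<^sub>m n" using adj_mat(3)[OF M] e by (intro eq_matI) (auto simp: mult.commute)
  finally have 2: "M' * M = 1\<^sub>m n" .
  show ?thesis using 1 2 by (intro exI[of _ M']) (auto simp: M'_def aM)
qed

lemma generic_inv:
  assumes A: "A \<in> carrier_mat n n" and B: "B \<in> carrier_mat n n"
    and c: "\<exists>i. coeff (det (pmat A B)) i \<notin> m"
  shows "\<exists>R. finite R \<and> (\<forall>\<mu>. (\<forall>r\<in>R. \<mu> - r \<notin> m) \<longrightarrow>
     (\<exists>M'. M' \<in> carrier_mat n n \<and> (\<mu> \<cdot>\<^sub>m A + B) * M' = 1\<^sub>m n \<and> M' * (\<mu> \<cdot>\<^sub>m A + B) = 1\<^sub>m n))"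
proof -
  obtain R where R: "finite R" "\<forall>x. poly (det (pmat A B)) x \<in> m \<longrightarrow> (\<exists>r\<in>R. x - r \<in> m)"
    using roots_mod_m[OF c] by blast
  show ?thesis
  proof (intro exI[of _ R] conjI allI impI)
    fix \<mu> assume "\<forall>r\<in>R. \<mu> - r \<notin> m"
    then have "det (\<mu> \<cdot>\<^sub>m A + B) \<notin> m" using R pmat_eval[OF A B, of \<mu>] by metis
    moreover have "\<mu> \<cdot>\<^sub>m A + B \<in> carrier_mat n n" using A B by simp
    ultimately show "\<exists>M'. M' \<in> carrier_mat n n \<and> (\<mu> \<cdot>\<^sub>m A + B) * M' = 1\<^sub>m n \<and> M' * (\<mu> \<cdot>\<^sub>m A + B) = 1\<^sub>m n"
      using inv_of_det by blast
  qed (use R in auto)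
qed

lemma pmat_char_poly:
  assumes L: "L \<in> carrier_mat n n"
  shows "\<exists>i. coeff (det (pmat (1\<^sub>m n) L)) i \<notin> m"
proof -
  have "pmat (1\<^sub>m n) L = char_poly_matrix (- L)"
    by (rule eq_matI) (use L in \<open>auto simp: pmat_def char_poly_matrix_def\<close>)
  then have "det (pmat (1\<^sub>m n) L) = char_poly (- L)" by (simp add: char_poly_def)
  moreover have "coeff (char_poly (- L)) n = 1" using degree_monic_char_poly[of "- L" n] L by simp
  ultimately show ?thesis using one_notin_m by metis
qed

lemma pmat_const1:
  assumes N: "N \<in> carrier_mat n n"
  shows "\<exists>i. coeff (det (pmat N (1\<^sub>m n))) i \<notin> m"
proof -
  have "coeff (det (pmat N (1\<^sub>m n))) 0 = det (0 \<cdot>\<^sub>m N + 1\<^sub>m n)"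
    using pmat_eval[OF N one_carrier_mat, of 0] by (simp add: poly_0_coeff_0)
  also have "0 \<cdot>\<^sub>m N + 1\<^sub>m n = 1\<^sub>m n" using N by (intro eq_matI) auto
  then have "det (0 \<cdot>\<^sub>m N + 1\<^sub>m n) = 1" by simp
  finally show ?thesis using one_notin_m by metis
qed

end

locale setting = oalgebra smult + localO m p
  for smult :: "'o::idom \<Rightarrow> 'a::{ring,monoid_mult} \<Rightarrow> 'a" and m :: "'o set" and p :: nat
begin

definition cvec :: "'a set \<Rightarrow> (nat \<Rightarrow> 'a) \<Rightarrow> nat \<Rightarrow> 'a \<Rightarrow> 'o vec" where
  "cvec Z e n a = vec n (\<lambda>i. coord Z a (e i))"

definition fvec :: "(nat \<Rightarrow> 'a) \<Rightarrow> nat \<Rightarrow> 'o vec \<Rightarrow> 'a" where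
  "fvec e n c = (\<Sum>j\<in>{0..<n}. smult (c $ j) (e j))"

lemma ospan_diff: "x \<in> ospan smult X \<Longrightarrow> y \<in> ospan smult X \<Longrightarrow> x - y \<in> ospan smult X"
  using ospan_add[of x X "smult (-1) y"] ospan_smult[of y X "-1"] by (simp add: sm_negl sm_one)

context
  fixes Z :: "'a set" and e :: "nat \<Rightarrow> 'a" and n :: nat
  assumes B: "is_obasis smult Z" and E: "bij_betw e {0..<n} Z"
begin

lemma E1: "w \<in> Z \<Longrightarrow> \<exists>i<n. w = e i"
  using E unfolding bij_betw_def by auto
lemma E2: "i < n \<Longrightarrow> e i \<in> Z"
  using E unfolding bij_betw_def by auto
lemma E3: "i < n \<Longrightarrow> j < n \<Longrightarrow> e i = e j \<Longrightarrow> i = j"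
  using E unfolding bij_betw_def inj_on_def by auto

lemma repr_e: "a = (\<Sum>i\<in>{0..<n}. smult (coord Z a (e i)) (e i))"
proof -
  have "a = (\<Sum>y\<in>Z. smult (coord Z a y) y)" by (rule coord_repr[OF B])
  also have "\<dots> = (\<Sum>i\<in>{0..<n}. smult (coord Z a (e i)) (e i))"
    by (rule sum.reindex_bij_betw[OF E, symmetric])
  finally show ?thesis .
qed

lemma coord_e_e: "i < n \<Longrightarrow> j < n \<Longrightarrow> coord Z (e j) (e i) = (if i = j then 1 else 0)"
  using coord_base[OF B E2 E2, of j i] E3 by auto

lemma coord_fvec: "l < n \<Longrightarrow> coord Z (fvec e n c) (e l) = c $ l"
proof -
  assume l: "l < n"
  have "coord Z (fvec e n c) (e l) = (\<Sum>j\<in>{0..<n}. c $ j * coord Z (e j) (e l))"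
    unfolding fvec_def by (rule coord_lin[OF B E2[OF l]])
  also have "\<dots> = (\<Sum>j\<in>{0..<n}. if j = l then c $ j else 0)"
    by (rule sum.cong) (use l coord_e_e in auto)
  also have "\<dots> = c $ l" using l by simp
  finally show ?thesis .
qed

lemma cvec_fvec: "c \<in> carrier_vec n \<Longrightarrow> cvec Z e n (fvec e n c) = c"
  by (intro eq_vecI) (auto simp: cvec_def coord_fvec)

lemma cvec_carrier[simp]: "cvec Z e n a \<in> carrier_vec n"
  unfolding cvec_def by simp

lemma cvec_inj: "cvec Z e n a = cvec Z e n b \<Longrightarrow> a = b"
proof (rule coord_eqI[OF B])
  fix w assume "cvec Z e n a = cvec Z e n b" "w \<in> Z"
  then obtain i where "i < n" "w = e i" using E1 by blast
  then show "coord Z a w = coord Z b w" using \<open>cvec Z e n a = cvec Z e n b\<close>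
    unfolding cvec_def by (metis index_vec)
qed

definition Lmat :: "'a \<Rightarrow> 'o mat" where
  "Lmat w = mat n n (\<lambda>(i,j). coord Z (w * e j) (e i))"

lemma Lmat_carrier[simp]: "Lmat w \<in> carrier_mat n n"
  unfolding Lmat_def by simp

lemma cvec_mult: "cvec Z e n (w * a) = Lmat w *\<^sub>v cvec Z e n a"
proof (rule eq_vecI)
  fix i assume "i < dim_vec (Lmat w *\<^sub>v cvec Z e n a)"
  then have i: "i < n" by (simp add: Lmat_def)
  have "w * a = w * (\<Sum>j\<in>{0..<n}. smult (coord Z a (e j)) (e j))" using repr_e[of a] by (rule arg_cong)
  also have "\<dots> = (\<Sum>j\<in>{0..<n}. smult (coord Z a (e j)) (w * e j))"
    by (simp add: sum_distrib_left sm_multr)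
  finally have "coord Z (w * a) (e i) = (\<Sum>j\<in>{0..<n}. coord Z a (e j) * coord Z (w * e j) (e i))"
    by (simp add: coord_lin[OF B E2[OF i]])
  also have "\<dots> = (Lmat w *\<^sub>v cvec Z e n a) $ i"
    using i by (auto simp: Lmat_def cvec_def scalar_prod_def mult.commute intro: sum.cong)
  finally show "cvec Z e n (w * a) $ i = (Lmat w *\<^sub>v cvec Z e n a) $ i"
    using i by (simp add: cvec_def)
qed (simp add: cvec_def Lmat_def)

lemma Lmat_shift: "Lmat (x + smult \<mu> 1) = \<mu> \<cdot>\<^sub>m 1\<^sub>m n + Lmat x"
proof (rule eq_matI)
  fix i j assume ij: "i < dim_row (\<mu> \<cdot>\<^sub>m 1\<^sub>m n + Lmat x)" "j < dim_col (\<mu> \<cdot>\<^sub>m 1\<^sub>m n + Lmat x)"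
  then have i: "i < n" and j: "j < n" by (auto simp: Lmat_def)
  have "(x + smult \<mu> 1) * e j = x * e j + smult \<mu> (e j)"
    by (simp add: distrib_right sm_multl[symmetric])
  then have "coord Z ((x + smult \<mu> 1) * e j) (e i) = coord Z (x * e j) (e i) + \<mu> * coord Z (e j) (e i)"
    by (simp add: coord_add[OF B E2[OF i]] coord_smult[OF B E2[OF i]])
  then show "Lmat (x + smult \<mu> 1) $$ (i, j) = (\<mu> \<cdot>\<^sub>m 1\<^sub>m n + Lmat x) $$ (i, j)"
    using i j coord_e_e[OF i j] by (auto simp: Lmat_def)
qed (auto simp: Lmat_def)

lemma unit_from_Lmat:
  assumes M': "M' \<in> carrier_mat n n" "Lmat w * M' = 1\<^sub>m n" "M' * Lmat w = 1\<^sub>m n"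
  shows "w \<in> unitsA"
proof -
  define v where "v = fvec e n (M' *\<^sub>v cvec Z e n 1)"
  have "cvec Z e n (w * v) = Lmat w *\<^sub>v (M' *\<^sub>v cvec Z e n 1)"
    unfolding cvec_mult v_def using M' by (subst cvec_fvec) auto
  also have "\<dots> = cvec Z e n 1"
    using M' by (simp flip: assoc_mult_mat_vec[of "Lmat w" n n M' n])
  finally have wv: "w * v = 1" by (rule cvec_inj)
  have "w * (v * w - 1) = 0" using wv by (simp add: algebra_simps mult.assoc[symmetric])
  then have "Lmat w *\<^sub>v cvec Z e n (v * w - 1) = cvec Z e n 0" by (simp flip: cvec_mult)
  then have "M' *\<^sub>v (Lmat w *\<^sub>v cvec Z e n (v * w - 1)) = M' *\<^sub>v cvec Z e n 0" by simp
  then have "cvec Z e n (v * w - 1) = M' *\<^sub>v cvec Z e n 0"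
    using M' by (simp flip: assoc_mult_mat_vec[of M' n n "Lmat w" n])
  also have "cvec Z e n 0 = 0\<^sub>v n" by (intro eq_vecI) (auto simp: cvec_def coord_zero[OF B E2])
  also have "M' *\<^sub>v 0\<^sub>v n = cvec Z e n 0" using M' by (intro eq_vecI) (auto simp: cvec_def coord_zero[OF B E2])
  finally have "v * w - 1 = 0" by (rule cvec_inj)
  then show ?thesis unfolding unitsA_def using wv by auto
qed

end

lemma exists_enum: "finite Z \<Longrightarrow> \<exists>e. bij_betw e {0..<card Z} Z"
  using ex_bij_betw_nat_finite by blast

lemma unit_generic:
  assumes B: "is_obasis smult Z"
  shows "\<exists>R. finite R \<and> (\<forall>\<mu>. (\<forall>r\<in>R. \<mu> - r \<notin> m) \<longrightarrow> x + smult \<mu> 1 \<in> unitsA)"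
proof -
  obtain e where E: "bij_betw e {0..<card Z} Z" using exists_enum basis_finite[OF B] by blast
  define n where "n = card Z"
  have E': "bij_betw e {0..<n} Z" using E n_def by simp
  obtain R where R: "finite R" "\<forall>\<mu>. (\<forall>r\<in>R. \<mu> - r \<notin> m) \<longrightarrow>
     (\<exists>M'. M' \<in> carrier_mat n n \<and> (\<mu> \<cdot>\<^sub>m 1\<^sub>m n + Lmat Z e n x) * M' = 1\<^sub>m n \<and> M' * (\<mu> \<cdot>\<^sub>m 1\<^sub>m n + Lmat Z e n x) = 1\<^sub>m n)"
    using generic_inv[OF one_carrier_mat Lmat_carrier[OF B E'] pmat_char_poly[OF Lmat_carrier[OF B E']]] by blast
  show ?thesis
  proof (intro exI[of _ R] conjI allI impI)
    fix \<mu> assume "\<forall>r\<in>R. \<mu> - r \<notin> m"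
    then obtain M' where "M' \<in> carrier_mat n n" "(\<mu> \<cdot>\<^sub>m 1\<^sub>m n + Lmat Z e n x) * M' = 1\<^sub>m n"
      "M' * (\<mu> \<cdot>\<^sub>m 1\<^sub>m n + Lmat Z e n x) = 1\<^sub>m n" using R by blast
    then show "x + smult \<mu> 1 \<in> unitsA"
      using unit_from_Lmat[OF B E', of M' "x + smult \<mu> 1"] Lmat_shift[OF B E'] by simp
  qed (use R in auto)
qed

end

context setting begin

lemma coord_other: "is_obasis smult Z \<Longrightarrow> v \<in> Z \<Longrightarrow> w \<in> Z \<Longrightarrow> v \<noteq> w \<Longrightarrow> coord Z v w = 0"
  using coord_base by auto

lemma replace_basis:
  assumes B: "is_obasis smult Z" and OZ: "Ob \<subseteq> Z"
  shows "\<exists>R. finite R \<and> (\<forall>\<mu>. (\<forall>r\<in>R. \<mu> - r \<notin> m) \<longrightarrow>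
            is_obasis smult ((Z - Ob) \<union> (\<lambda>w. w + smult \<mu> (h w)) ` Ob))"
proof -
  have finZ: "finite Z" using basis_finite[OF B] .
  then have finO: "finite Ob" using OZ finite_subset by blast
  define k where "k = card Ob"
  obtain e where E: "bij_betw e {0..<k} Ob" using exists_enum[OF finO] unfolding k_def by blast
  have eO: "j < k \<Longrightarrow> e j \<in> Ob" for j using E unfolding bij_betw_def by auto
  have eZ: "j < k \<Longrightarrow> e j \<in> Z" for j using eO OZ by auto
  have einj: "i < k \<Longrightarrow> j < k \<Longrightarrow> e i = e j \<Longrightarrow> i = j" for i j
    using E unfolding bij_betw_def inj_on_def by auto
  have esurj: "w \<in> Ob \<Longrightarrow> \<exists>i<k. w = e i" for w using E unfolding bij_betw_def by auto
  define N where "N = mat k k (\<lambda>(i,j). coord Z (h (e j)) (e i))"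
  have Nc: "N \<in> carrier_mat k k" unfolding N_def by simp
  obtain R where R: "finite R" "\<forall>\<mu>. (\<forall>r\<in>R. \<mu> - r \<notin> m) \<longrightarrow>
     (\<exists>M'. M' \<in> carrier_mat k k \<and> (\<mu> \<cdot>\<^sub>m N + 1\<^sub>m k) * M' = 1\<^sub>m k \<and> M' * (\<mu> \<cdot>\<^sub>m N + 1\<^sub>m k) = 1\<^sub>m k)"
    using generic_inv[OF Nc one_carrier_mat pmat_const1[OF Nc]] by blast
  show ?thesis
  proof (intro exI[of _ R] conjI allI impI)
    show "finite R" by fact
    fix \<mu> assume "\<forall>r\<in>R. \<mu> - r \<notin> m"
    then obtain P' where P': "P' \<in> carrier_mat k k" "(\<mu> \<cdot>\<^sub>m N + 1\<^sub>m k) * P' = 1\<^sub>m k"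
      "P' * (\<mu> \<cdot>\<^sub>m N + 1\<^sub>m k) = 1\<^sub>m k" using R by blast
    define P where "P = \<mu> \<cdot>\<^sub>m N + 1\<^sub>m k"
    have Pc: "P \<in> carrier_mat k k" unfolding P_def using Nc by simp
    have PP': "P * P' = 1\<^sub>m k" "P' * P = 1\<^sub>m k" using P' unfolding P_def by auto
    define f where "f w = w + smult \<mu> (h w)" for w
    define Z' where "Z' = (Z - Ob) \<union> f ` Ob"
    have K1: "coord Z (f (e j)) (e i) = P $$ (i, j)" if ij: "i < k" "j < k" for i j
    proof -
      have "coord Z (f (e j)) (e i) = coord Z (e j) (e i) + \<mu> * coord Z (h (e j)) (e i)"
        unfolding f_def using ij by (simp add: coord_add[OF B eZ] coord_smult[OF B eZ])
      also have "coord Z (e j) (e i) = (if i = j then 1 else 0)"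
        using coord_base[OF B eZ eZ, of j i] einj ij by auto
      finally show ?thesis using ij unfolding P_def N_def by auto
    qed
    have K2: "coord Z (\<Sum>j\<in>{0..<k}. smult (d $ j) (f (e j))) (e i) = (P *\<^sub>v d) $ i"
      if i: "i < k" and d: "d \<in> carrier_vec k" for i d
    proof -
      have "coord Z (\<Sum>j\<in>{0..<k}. smult (d $ j) (f (e j))) (e i) = (\<Sum>j\<in>{0..<k}. d $ j * coord Z (f (e j)) (e i))"
        by (rule coord_lin[OF B eZ[OF i]])
      also have "\<dots> = (\<Sum>j\<in>{0..<k}. P $$ (i, j) * d $ j)"
        by (rule sum.cong) (use K1 i in \<open>auto simp: mult.commute\<close>)
      also have "\<dots> = (P *\<^sub>v d) $ i" using i d Pc by (auto simp: scalar_prod_def)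
      finally show ?thesis .
    qed
    have colP: "(P *\<^sub>v unit_vec k j) = v" if j: "j < k" and v: "v \<in> carrier_vec k" "\<And>i. i < k \<Longrightarrow> P $$ (i, j) = v $ i" for j v
    proof (rule eq_vecI)
      fix i assume "i < dim_vec v"
      then have i: "i < k" using v by auto
      have "(P *\<^sub>v unit_vec k j) $ i = row P i \<bullet> unit_vec k j" using i Pc by simp
      also have "\<dots> = P $$ (i, j)" using i j Pc by simp
      finally show "(P *\<^sub>v unit_vec k j) $ i = v $ i" using v(2)[OF i] by simp
    qed (use Pc v in auto)
    have unit_from: "unit_vec k j = P' *\<^sub>v v" if j: "j < k" and v: "v \<in> carrier_vec k" "\<And>i. i < k \<Longrightarrow> P $$ (i, j) = v $ i" for j v
    proof -
      have "P' *\<^sub>v v = P' *\<^sub>v (P *\<^sub>v unit_vec k j)" using colP[OF j v] by simp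
      also have "\<dots> = (P' * P) *\<^sub>v unit_vec k j" using P'(1) Pc by (simp flip: assoc_mult_mat_vec)
      also have "\<dots> = unit_vec k j" using PP' by simp
      finally show ?thesis by simp
    qed
    have finj: "inj_on f Ob"
    proof (rule inj_onI)
      fix w1 w2 assume w: "w1 \<in> Ob" "w2 \<in> Ob" "f w1 = f w2"
      obtain j1 j2 where j: "j1 < k" "j2 < k" "w1 = e j1" "w2 = e j2" using esurj w by metis
      define v where "v = vec k (\<lambda>i. P $$ (i, j1))"
      have "unit_vec k j1 = P' *\<^sub>v v" by (rule unit_from) (use j in \<open>auto simp: v_def\<close>)
      moreover have "unit_vec k j2 = P' *\<^sub>v v"
        by (rule unit_from) (use j w K1 in \<open>auto simp: v_def\<close>, metis)
      ultimately have "unit_vec k j1 = (unit_vec k j2 :: 'o vec)" by simp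
      then have "(unit_vec k j1 :: 'o vec) $ j1 = unit_vec k j2 $ j1" by simp
      then have "j1 = j2" using j by (auto split: if_splits)
      then show "w1 = w2" using j by simp
    qed
    have fdisj: "f ` Ob \<inter> (Z - Ob) = {}"
    proof (rule ccontr)
      assume "f ` Ob \<inter> (Z - Ob) \<noteq> {}"
      then obtain j where j: "j < k" "f (e j) \<in> Z - Ob" using esurj by blast
      have "unit_vec k j = P' *\<^sub>v 0\<^sub>v k"
      proof (rule unit_from[OF j(1)])
        fix i assume i: "i < k"
        have "e i \<noteq> f (e j)" using eO[OF i] j by auto
        then have "coord Z (f (e j)) (e i) = 0" using coord_other[OF B _ eZ[OF i]] j by auto
        then show "P $$ (i, j) = 0\<^sub>v k $ i" using K1[OF i j(1)] i by simp
      qed simp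
      also have "\<dots> = 0\<^sub>v k" using P'(1) by auto
      finally have "(unit_vec k j :: 'o vec) $ j = 0\<^sub>v k $ j" by simp
      then show False using j by simp
    qed
    have fO: "f ` Ob = (\<lambda>j. f (e j)) ` {0..<k}" using E unfolding bij_betw_def by auto
    have finj2: "inj_on (\<lambda>j. f (e j)) {0..<k}"
      using finj E unfolding bij_betw_def inj_on_def by auto
    have finZ': "finite Z'" unfolding Z'_def using finZ finO by auto
    have ZinS: "w \<in> ospan smult Z'" if w: "w \<in> Z" for w
    proof (cases "w \<in> Ob")
      case False then show ?thesis using w by (intro ospan_base) (auto simp: Z'_def)
    next
      case True
      then obtain i where i: "i < k" "w = e i" using esurj by blast
      define d where "d = P' *\<^sub>v unit_vec k i"
      have dc: "d \<in> carrier_vec k" unfolding d_def using P'(1) by simp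
      define t where "t = (\<Sum>j\<in>{0..<k}. smult (d $ j) (f (e j)))"
      have tS: "t \<in> ospan smult Z'" unfolding t_def
        by (intro ospan_sum ospan_smult ospan_base) (auto simp: Z'_def eO)
      have Pd: "P *\<^sub>v d = unit_vec k i" unfolding d_def using P'(1) Pc PP'
        by (simp flip: assoc_mult_mat_vec)
      define s where "s = t - e i"
      have s0: "coord Z s (e l) = 0" if l: "l < k" for l
      proof -
        have "coord Z s (e l) = coord Z t (e l) - coord Z (e i) (e l)"
          unfolding s_def by (rule coord_diff[OF B eZ[OF l]])
        also have "coord Z t (e l) = unit_vec k i $ l" unfolding t_def using K2[OF l dc] Pd by simp
        also have "coord Z (e i) (e l) = (if l = i then 1 else 0)"
          using coord_base[OF B eZ eZ, of i l] einj i l by auto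
        finally show ?thesis using i l by simp
      qed
      have "s = (\<Sum>y\<in>Z. smult (coord Z s y) y)" by (rule coord_repr[OF B])
      also have "\<dots> \<in> ospan smult Z'"
      proof (rule ospan_sum)
        fix y assume y: "y \<in> Z"
        show "smult (coord Z s y) y \<in> ospan smult Z'"
        proof (cases "y \<in> Ob")
          case True
          then obtain l where "l < k" "y = e l" using esurj by blast
          then show ?thesis using s0 ospan_zero by simp
        next
          case False
          then show ?thesis using y by (intro ospan_smult ospan_base) (auto simp: Z'_def)
        qed
      qed
      finally have "s \<in> ospan smult Z'" .
      then have "t - s \<in> ospan smult Z'" using tS ospan_diff by blast
      then show ?thesis unfolding s_def i by simp
    qed
    have allS: "a \<in> ospan smult Z'" for a
    proof -
      have "a = (\<Sum>y\<in>Z. smult (coord Z a y) y)" by (rule coord_repr[OF B])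
      also have "\<dots> \<in> ospan smult Z'" by (intro ospan_sum ospan_smult ZinS)
      finally show ?thesis .
    qed
    have indep: "c z0 = 0" if c: "(\<Sum>z\<in>Z'. smult (c z) z) = 0" and z0: "z0 \<in> Z'" for c z0
    proof -
      define T1 where "T1 = (\<Sum>z\<in>Z - Ob. smult (c z) z)"
      define d where "d = vec k (\<lambda>j. c (f (e j)))"
      have dc: "d \<in> carrier_vec k" unfolding d_def by simp
      define T2 where "T2 = (\<Sum>j\<in>{0..<k}. smult (d $ j) (f (e j)))"
      have "(\<Sum>z\<in>f ` Ob. smult (c z) z) = (\<Sum>j\<in>{0..<k}. smult (c (f (e j))) (f (e j)))"
        unfolding fO by (rule sum.reindex[OF finj2, unfolded comp_def])
      also have "\<dots> = T2" unfolding T2_def d_def by (rule sum.cong) auto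
      finally have "(\<Sum>z\<in>f ` Ob. smult (c z) z) = T2" .
      moreover have "(\<Sum>z\<in>Z'. smult (c z) z) = T1 + (\<Sum>z\<in>f ` Ob. smult (c z) z)"
        unfolding Z'_def T1_def using finZ finO fdisj by (subst sum.union_disjoint) auto
      ultimately have T12: "T1 + T2 = 0" using c by simp
      have Pd0: "P *\<^sub>v d = 0\<^sub>v k"
      proof (rule eq_vecI)
        fix l assume "l < dim_vec (0\<^sub>v k :: 'o vec)"
        then have l: "l < k" by simp
        have "coord Z T1 (e l) = (\<Sum>z\<in>Z - Ob. c z * coord Z z (e l))"
          unfolding T1_def by (rule coord_lin[OF B eZ[OF l]])
        also have "\<dots> = 0" using eO[OF l] coord_other[OF B _ eZ[OF l]] by (intro sum.neutral) auto
        finally have "coord Z T1 (e l) = 0" .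
        moreover have "coord Z T2 (e l) = (P *\<^sub>v d) $ l" unfolding T2_def by (rule K2[OF l dc])
        moreover have "coord Z (T1 + T2) (e l) = 0" using T12 coord_zero[OF B eZ[OF l]] by simp
        ultimately show "(P *\<^sub>v d) $ l = 0\<^sub>v k $ l" using coord_add[OF B eZ[OF l]] l by simp
      qed (use Pc in simp)
      have "d = P' *\<^sub>v (P *\<^sub>v d)" using P'(1) Pc PP' dc by (simp flip: assoc_mult_mat_vec)
      also have "\<dots> = 0\<^sub>v k" using Pd0 P'(1) by (simp, intro eq_vecI, auto)
      finally have d0: "d = 0\<^sub>v k" .
      then have cf0: "c (f (e j)) = 0" if "j < k" for j
        using that unfolding d_def by (metis index_vec index_zero_vec(1))
      then have "T2 = 0" unfolding T2_def d0 by simp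
      then have "T1 = 0" using T12 by simp
      then have "(\<Sum>z\<in>Z. smult (if z \<in> Z - Ob then c z else 0) z) = 0"
        unfolding T1_def using finZ
        by (subst sum.mono_neutral_right[of Z "Z - Ob"]) auto
      then have cZ: "z \<in> Z - Ob \<Longrightarrow> c z = 0" for z
        using basis_indep[OF B, of "\<lambda>z. if z \<in> Z - Ob then c z else 0" z] by auto
      show ?thesis
      proof (cases "z0 \<in> Z - Ob")
        case True then show ?thesis using cZ by simp
      next
        case False
        then obtain j where "j < k" "z0 = f (e j)" using z0 esurj unfolding Z'_def by auto
        then show ?thesis using cf0 by simp
      qed
    qed
    have "is_obasis smult Z'"
      unfolding is_obasis_def
    proof (intro conjI allI impI ballI)
      show "finite Z'" by fact
      fix a show "\<exists>c. a = (\<Sum>y\<in>Z'. smult (c y) y)"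
        using allS[of a] ospan_sum_rep[OF finZ'] by auto
    next
      fix c y assume "(\<Sum>y\<in>Z'. smult (c y) y) = 0" "y \<in> Z'"
      then show "c y = 0" using indep by blast
    qed
    then show "is_obasis smult ((Z - Ob) \<union> (\<lambda>w. w + smult \<mu> (h w)) ` Ob)"
      unfolding Z'_def f_def by simp
  qed
qed

end

locale main = setting smult m p
  for smult :: "'o::idom \<Rightarrow> 'a::{ring,monoid_mult} \<Rightarrow> 'a" and m :: "'o set" and p :: nat +
  fixes S :: "('g,'b) monoid_scheme" and \<sigma> :: "'g \<Rightarrow> 'a"
  assumes grp: "group S" and fin: "finite (carrier S)" and pgrp: "\<exists>n. card (carrier S) = p ^ n"
    and \<sigma>1: "\<sigma> \<one>\<^bsub>S\<^esub> = 1"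
    and \<sigma>m: "\<And>s t. s \<in> carrier S \<Longrightarrow> t \<in> carrier S \<Longrightarrow> \<sigma> (s \<otimes>\<^bsub>S\<^esub> t) = \<sigma> s * \<sigma> t"
begin

abbreviation "G \<equiv> S \<times>\<times> S"
abbreviation "ac \<equiv> act S \<sigma>"

lemma grpG: "group G" using DirProd_group[OF grp grp] .

lemma finG: "finite (carrier G)" using fin by simp

lemma \<sigma>inv: "s \<in> carrier S \<Longrightarrow> \<sigma> s * \<sigma> (inv\<^bsub>S\<^esub> s) = 1"
  using \<sigma>m[of s "inv\<^bsub>S\<^esub> s"] \<sigma>1 grp by (simp add: group.r_inv group.inv_closed)

lemma \<sigma>inv': "s \<in> carrier S \<Longrightarrow> \<sigma> (inv\<^bsub>S\<^esub> s) * \<sigma> s = 1"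
  using \<sigma>m[of "inv\<^bsub>S\<^esub> s" s] \<sigma>1 grp by (simp add: group.l_inv group.inv_closed)

lemma \<sigma>unit: "s \<in> carrier S \<Longrightarrow> \<sigma> s \<in> unitsA"
  unfolding unitsA_def using \<sigma>inv \<sigma>inv' by blast

lemma units_mult: "a \<in> unitsA \<Longrightarrow> b \<in> unitsA \<Longrightarrow> a * b \<in> unitsA"
proof -
  assume "a \<in> unitsA" "b \<in> unitsA"
  then obtain a' b' where "a * a' = 1" "a' * a = 1" "b * b' = 1" "b' * b = 1" unfolding unitsA_def by blast
  then have "(a * b) * (b' * a') = 1" "(b' * a') * (a * b) = 1"
    by (simp_all add: mult.assoc) (simp_all add: mult.assoc[symmetric])
  then show ?thesis unfolding unitsA_def by blast
qed

lemma act_one: "ac \<one>\<^bsub>G\<^esub> a = a"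
  unfolding act_def using \<sigma>1 grp by (simp add: monoid.inv_one group.is_monoid)

lemma act_mult: "u \<in> carrier G \<Longrightarrow> v \<in> carrier G \<Longrightarrow> ac (u \<otimes>\<^bsub>G\<^esub> v) a = ac u (ac v a)"
proof -
  assume u: "u \<in> carrier G" and v: "v \<in> carrier G"
  obtain s t s' t' where st: "u = (s,t)" "v = (s',t')" by (cases u, cases v)
  then have c: "s \<in> carrier S" "t \<in> carrier S" "s' \<in> carrier S" "t' \<in> carrier S" using u v by auto
  have "inv\<^bsub>S\<^esub> (t \<otimes>\<^bsub>S\<^esub> t') = inv\<^bsub>S\<^esub> t' \<otimes>\<^bsub>S\<^esub> inv\<^bsub>S\<^esub> t" using grp c by (simp add: group.inv_mult_group)
  then show ?thesis unfolding act_def st using c grp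
    by (simp add: \<sigma>m group.inv_closed mult.assoc)
qed

lemma inv_G: "u \<in> carrier G \<Longrightarrow> inv\<^bsub>G\<^esub> u = (inv\<^bsub>S\<^esub> fst u, inv\<^bsub>S\<^esub> snd u)"
  using inv_DirProd[OF grp grp, of "fst u" "snd u"] by (cases u) auto

lemma act_inv: "u \<in> carrier G \<Longrightarrow> ac (inv\<^bsub>G\<^esub> u) (ac u a) = a"
  using act_mult[of "inv\<^bsub>G\<^esub> u" u a] group.l_inv[OF grpG] group.inv_closed[OF grpG] act_one by simp

lemma act_inv': "u \<in> carrier G \<Longrightarrow> ac u (ac (inv\<^bsub>G\<^esub> u) a) = a"
  using act_mult[of u "inv\<^bsub>G\<^esub> u" a] group.r_inv[OF grpG] group.inv_closed[OF grpG] act_one by simp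

lemma act_add: "ac u (a + b) = ac u a + ac u b"
  unfolding act_def by (simp add: distrib_left distrib_right)

lemma act_smult: "ac u (smult r a) = smult r (ac u a)"
  unfolding act_def by (simp add: sm_multl[symmetric] sm_multr[symmetric])

lemma act_zero: "ac u 0 = 0" unfolding act_def by simp

lemma act_sum: "ac u (sum f I) = (\<Sum>i\<in>I. ac u (f i))"
  by (induct I rule: infinite_finite_induct) (auto simp: act_zero act_add)

lemma act_unit: "u \<in> carrier G \<Longrightarrow> a \<in> unitsA \<Longrightarrow> ac u a \<in> unitsA"
proof -
  assume u: "u \<in> carrier G" and a: "a \<in> unitsA"
  have "\<sigma> (fst u) \<in> unitsA" "\<sigma> (inv\<^bsub>S\<^esub> snd u) \<in> unitsA"
    using u \<sigma>unit grp by (auto simp: group.inv_closed)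
  then show ?thesis unfolding act_def using a units_mult by blast
qed

lemma act_unit_rev: "u \<in> carrier G \<Longrightarrow> ac u a \<in> unitsA \<Longrightarrow> a \<in> unitsA"
  using act_unit[of "inv\<^bsub>G\<^esub> u" "ac u a"] act_inv group.inv_closed[OF grpG] by metis

definition ginv :: "'a set \<Rightarrow> bool" where
  "ginv Z \<longleftrightarrow> (\<forall>g\<in>carrier G. \<forall>w\<in>Z. ac g w \<in> Z)"

lemma SS_ginv: "SS_invariant S \<sigma> Z \<Longrightarrow> ginv Z"
  unfolding ginv_def
proof (intro ballI)
  fix g w assume Z: "SS_invariant S \<sigma> Z" and g: "g \<in> carrier G" and w: "w \<in> Z"
  obtain s t where st: "g = (s, t)" by (cases g)
  then have c: "s \<in> carrier S" "inv\<^bsub>S\<^esub> t \<in> carrier S" using g grp by (auto simp: group.inv_closed)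
  have "\<sigma> s * w \<in> Z" using Z c w unfolding SS_invariant_def by blast
  then have "\<sigma> s * w * \<sigma> (inv\<^bsub>S\<^esub> t) \<in> Z" using Z c unfolding SS_invariant_def by blast
  then show "ac g w \<in> Z" unfolding act_def st by simp
qed

lemma ginv_SS: "ginv Z \<Longrightarrow> SS_invariant S \<sigma> Z"
  unfolding SS_invariant_def
proof (intro ballI conjI)
  fix s assume Z: "ginv Z" and s: "s \<in> carrier S"
  have isc: "inv\<^bsub>S\<^esub> s \<in> carrier S" using s grp by (simp add: group.inv_closed)
  have L: "\<sigma> x * w \<in> Z" if "x \<in> carrier S" "w \<in> Z" for x w
  proof -
    have "ac (x, \<one>\<^bsub>S\<^esub>) w \<in> Z" using Z that grp unfolding ginv_def by (auto simp: monoid.one_closed group.is_monoid)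
    then show ?thesis unfolding act_def using grp \<sigma>1 by (simp add: monoid.inv_one group.is_monoid)
  qed
  have R: "w * \<sigma> x \<in> Z" if "x \<in> carrier S" "w \<in> Z" for x w
  proof -
    have "ac (\<one>\<^bsub>S\<^esub>, inv\<^bsub>S\<^esub> x) w \<in> Z" using Z that grp unfolding ginv_def
      by (auto simp: monoid.one_closed group.is_monoid group.inv_closed)
    then show ?thesis unfolding act_def using grp \<sigma>1 that by (simp add: group.inv_inv)
  qed
  show "(\<lambda>y. \<sigma> s * y) ` Z = Z"
  proof
    show "(\<lambda>y. \<sigma> s * y) ` Z \<subseteq> Z" using L s by blast
    show "Z \<subseteq> (\<lambda>y. \<sigma> s * y) ` Z"
    proof
      fix w assume w: "w \<in> Z"
      have "w = \<sigma> s * (\<sigma> (inv\<^bsub>S\<^esub> s) * w)" using \<sigma>inv[OF s] by (simp add: mult.assoc[symmetric])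
      then show "w \<in> (\<lambda>y. \<sigma> s * y) ` Z" using L[OF isc w] by blast
    qed
  qed
  show "(\<lambda>y. y * \<sigma> s) ` Z = Z"
  proof
    show "(\<lambda>y. y * \<sigma> s) ` Z \<subseteq> Z" using R s by blast
    show "Z \<subseteq> (\<lambda>y. y * \<sigma> s) ` Z"
    proof
      fix w assume w: "w \<in> Z"
      have "w = (w * \<sigma> (inv\<^bsub>S\<^esub> s)) * \<sigma> s" using \<sigma>inv'[OF s] by (simp add: mult.assoc)
      then show "w \<in> (\<lambda>y. y * \<sigma> s) ` Z" using R[OF isc w] by blast
    qed
  qed
qed

lemma act_bij: "ginv Z \<Longrightarrow> u \<in> carrier G \<Longrightarrow> bij_betw (ac u) Z Z"
proof -
  assume Z: "ginv Z" and u: "u \<in> carrier G"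
  have iu: "inv\<^bsub>G\<^esub> u \<in> carrier G" by (rule group.inv_closed[OF grpG u])
  show ?thesis unfolding bij_betw_def
  proof
    show "inj_on (ac u) Z" by (rule inj_onI) (metis act_inv[OF u])
    show "ac u ` Z = Z"
    proof
      show "ac u ` Z \<subseteq> Z" using Z u unfolding ginv_def by blast
      show "Z \<subseteq> ac u ` Z"
      proof
        fix w assume "w \<in> Z"
        then have "ac (inv\<^bsub>G\<^esub> u) w \<in> Z" using Z iu unfolding ginv_def by blast
        then show "w \<in> ac u ` Z" using act_inv'[OF u, of w] by (metis image_eqI)
      qed
    qed
  qed
qed

lemma coord_act:
  assumes B: "is_obasis smult Z" and Z: "ginv Z" and u: "u \<in> carrier G" and w: "w \<in> Z"
  shows "coord Z (ac u a) w = coord Z a (ac (inv\<^bsub>G\<^esub> u) w)"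
proof -
  have iu: "inv\<^bsub>G\<^esub> u \<in> carrier G" by (rule group.inv_closed[OF grpG u])
  have "ac u a = ac u (\<Sum>y\<in>Z. smult (coord Z a y) y)" using coord_repr[OF B, of a] by (rule arg_cong)
  also have "\<dots> = (\<Sum>y\<in>Z. smult (coord Z a y) (ac u y))" by (simp add: act_sum act_smult)
  also have "\<dots> = (\<Sum>y\<in>Z. smult (coord Z a (ac (inv\<^bsub>G\<^esub> u) (ac u y))) (ac u y))"
    using act_inv[OF u] by simp
  also have "\<dots> = (\<Sum>y'\<in>Z. smult (coord Z a (ac (inv\<^bsub>G\<^esub> u) y')) y')"
    by (rule sum.reindex_bij_betw[OF act_bij[OF Z u], of "\<lambda>y'. smult (coord Z a (ac (inv\<^bsub>G\<^esub> u) y')) y'"])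
  finally show ?thesis by (rule coord_uniq[OF B _ w])
qed

end

context main begin

definition stab :: "('g \<times> 'g) set \<Rightarrow> 'a \<Rightarrow> ('g \<times> 'g) set" where
  "stab U y = {g \<in> U. ac g y = y}"

definition orb :: "('g \<times> 'g) set \<Rightarrow> 'a \<Rightarrow> 'a set" where
  "orb U y = (\<lambda>g. ac g y) ` U"

definition cosets :: "('g \<times> 'g) set \<Rightarrow> ('g \<times> 'g) set \<Rightarrow> ('g \<times> 'g) set set" where
  "cosets U V = (\<lambda>u. u <#\<^bsub>G\<^esub> V) ` U"

lemma trace_cosets: "trace S \<sigma> U V a = (\<Sum>C\<in>cosets U V. ac (SOME u. u \<in> C) a)"
  unfolding trace_def cosets_def by simp

lemma stab_subgroup:
  assumes U: "subgroup U G" shows "subgroup (stab U y) G"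
proof
  show "stab U y \<subseteq> carrier G" using subgroup.subset[OF U] unfolding stab_def by auto
  fix g h assume gh: "g \<in> stab U y" "h \<in> stab U y"
  then have gU: "g \<in> U" and hU: "h \<in> U" and gy: "ac g y = y" and hy: "ac h y = y" unfolding stab_def by auto
  have gc: "g \<in> carrier G" and hc: "h \<in> carrier G" using gU hU subgroup.subset[OF U] by auto
  have "ac (g \<otimes>\<^bsub>G\<^esub> h) y = y" using act_mult[OF gc hc] gy hy by simp
  moreover have "g \<otimes>\<^bsub>G\<^esub> h \<in> U" by (rule subgroup.m_closed[OF U gU hU])
  ultimately show "g \<otimes>\<^bsub>G\<^esub> h \<in> stab U y" unfolding stab_def by blast
next
  show "\<one>\<^bsub>G\<^esub> \<in> stab U y" using U unfolding stab_def by (simp add: act_one subgroup.one_closed del: one_DirProd)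
next
  fix g assume g: "g \<in> stab U y"
  then have gc: "g \<in> carrier G" using subgroup.subset[OF U] unfolding stab_def by auto
  have "ac (inv\<^bsub>G\<^esub> g) y = ac (inv\<^bsub>G\<^esub> g) (ac g y)" using g unfolding stab_def by simp
  also have "\<dots> = y" by (rule act_inv[OF gc])
  finally show "inv\<^bsub>G\<^esub> g \<in> stab U y" using g U unfolding stab_def by (simp add: subgroup.m_inv_closed del: carrier_DirProd)
qed

lemma rep_coset:
  assumes U: "subgroup U G" and V: "subgroup V G" and VU: "V \<subseteq> U" and u: "u \<in> U"
  shows "\<exists>v\<in>V. (SOME x. x \<in> u <#\<^bsub>G\<^esub> V) = u \<otimes>\<^bsub>G\<^esub> v"
proof -
  have uc: "u \<in> carrier G" using u subgroup.subset[OF U] by auto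
  have "u \<in> u <#\<^bsub>G\<^esub> V" by (rule group.lcos_self[OF grpG uc V])
  then have "(SOME x. x \<in> u <#\<^bsub>G\<^esub> V) \<in> u <#\<^bsub>G\<^esub> V" by (rule someI)
  then show ?thesis unfolding l_coset_def by blast
qed

lemma rep_in_U:
  assumes U: "subgroup U G" and V: "subgroup V G" and VU: "V \<subseteq> U" and C: "C \<in> cosets U V"
  shows "(SOME x. x \<in> C) \<in> U"
proof -
  obtain u where u: "u \<in> U" "C = u <#\<^bsub>G\<^esub> V" using C unfolding cosets_def by blast
  then obtain v where v: "v \<in> V" "(SOME x. x \<in> C) = u \<otimes>\<^bsub>G\<^esub> v" using rep_coset[OF U V VU] by blast
  have "v \<in> U" using v VU by blast
  then have "u \<otimes>\<^bsub>G\<^esub> v \<in> U" by (rule subgroup.m_closed[OF U u(1)])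
  then show ?thesis using v by simp
qed

lemma trace_coord:
  assumes B: "is_obasis smult Z" and Z: "ginv Z" and U: "subgroup U G" and V: "subgroup V G" and VU: "V \<subseteq> U"
    and y: "y \<in> Z" and fx: "\<forall>g\<in>U. ac g y = y"
  shows "coord Z (trace S \<sigma> U V a) y = of_nat (card (cosets U V)) * coord Z a y"
proof -
  have "coord Z (trace S \<sigma> U V a) y = (\<Sum>C\<in>cosets U V. coord Z (ac (SOME u. u \<in> C) a) y)"
    unfolding trace_cosets by (rule coord_sum[OF B y])
  also have "\<dots> = (\<Sum>C\<in>cosets U V. coord Z a y)"
  proof (rule sum.cong)
    fix C assume C: "C \<in> cosets U V"
    define r where "r = (SOME u. u \<in> C)"
    have rU: "r \<in> U" unfolding r_def by (rule rep_in_U[OF U V VU C])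
    then have rc: "r \<in> carrier G" using subgroup.subset[OF U] by blast
    have "inv\<^bsub>G\<^esub> r \<in> U" using rU U by (simp add: subgroup.m_inv_closed del: carrier_DirProd)
    then have "ac (inv\<^bsub>G\<^esub> r) y = y" using fx by blast
    then show "coord Z (ac (SOME u. u \<in> C) a) y = coord Z a y"
      using coord_act[OF B Z rc y, of a] unfolding r_def by simp
  qed simp
  also have "\<dots> = of_nat (card (cosets U V)) * coord Z a y" by simp
  finally show ?thesis .
qed

lemma card_subgroup_ppow:
  assumes U: "subgroup U G" shows "\<exists>a. card U = p ^ a"
proof -
  obtain n where n: "card (carrier S) = p ^ n" using pgrp by blast
  have "card (rcosets\<^bsub>G\<^esub> U) * card U = Coset.order G" by (rule group.lagrange[OF grpG U])
  also have "Coset.order G = p ^ (n + n)" unfolding Coset.order_def using n by (simp add: card_cartesian_product power_add)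
  finally have "card U dvd p ^ (n + n)" by (metis dvd_triv_right)
  then show ?thesis using divides_primepow_nat[OF p_prime] by blast
qed

lemma cosets_card:
  assumes U: "subgroup U G" and V: "subgroup V G" and VU: "V \<subset> U"
  shows "p dvd card (cosets U V)"
proof -
  define K where "K = G\<lparr>carrier := U\<rparr>"
  have gK: "group K" unfolding K_def by (rule subgroup.subgroup_is_group[OF U grpG])
  have VK: "subgroup V K" unfolding K_def using group.subgroup_incl[OF grpG V U] VU by auto
  have finU: "finite U" using finG subgroup.subset[OF U] finite_subset by blast
  have "card (lcosets\<^bsub>K\<^esub> V) * card V = Coset.order K" by (rule group.l_lagrange[OF gK _ VK]) (simp add: K_def finU)
  moreover have "lcosets\<^bsub>K\<^esub> V = cosets U V" unfolding LCOSETS_def cosets_def K_def by auto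
  moreover have "Coset.order K = card U" unfolding Coset.order_def K_def by simp
  ultimately have eq: "card (cosets U V) * card V = card U" by simp
  obtain a where a: "card U = p ^ a" using card_subgroup_ppow[OF U] by blast
  obtain b where b: "card V = p ^ b" using card_subgroup_ppow[OF V] by blast
  have "card V < card U" using psubset_card_mono[OF finU VU] .
  then have "b < a" using a b p_prime by (metis prime_gt_1_nat power_less_imp_less_exp)
  have "card (cosets U V) * p ^ b = p ^ (a - b) * p ^ b"
    using eq a b \<open>b < a\<close> by (simp add: power_add[symmetric])
  then have "card (cosets U V) = p ^ (a - b)" using p_prime by (simp add: prime_gt_0_nat)
  then show ?thesis using \<open>b < a\<close> by simp
qed

lemma of_nat_dvd_m: "p dvd k \<Longrightarrow> (of_nat k :: 'o) \<in> m"
proof -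
  assume "p dvd k"
  then obtain q where "k = p * q" by (elim dvdE)
  then have "(of_nat k :: 'o) = of_nat p * of_nat q" by simp
  then show ?thesis using m_multr[OF p_in_m] by simp
qed

lemma BN:
  assumes B: "is_obasis smult Z" and Z: "ginv Z" and U: "subgroup U G"
    and y: "y \<in> Z" and fx: "\<forall>g\<in>U. ac g y = y"
  shows "brauer_nonzero smult m S \<sigma> U"
proof -
  define X where "X = {smult r a | r a. r \<in> m \<and> a \<in> fixpts S \<sigma> U} \<union>
           (\<Union>V\<in>{V. subgroup V (S \<times>\<times> S) \<and> V \<subset> U}. trace S \<sigma> U V ` fixpts S \<sigma> V)"
  have Xm: "coord Z b y \<in> m" if b: "b \<in> X" for b
  proof -
    consider (sm) r a where "b = smult r a" "r \<in> m" | (tr) V a where "subgroup V G" "V \<subset> U" "b = trace S \<sigma> U V a"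
    proof -
      assume c1: "\<And>r a. b = smult r a \<Longrightarrow> r \<in> m \<Longrightarrow> thesis"
        and c2: "\<And>V a. subgroup V G \<Longrightarrow> V \<subset> U \<Longrightarrow> b = trace S \<sigma> U V a \<Longrightarrow> thesis"
      from b[unfolded X_def] show thesis
      proof (elim UnE)
        assume "b \<in> {smult r a | r a. r \<in> m \<and> a \<in> fixpts S \<sigma> U}"
        then obtain r a where "b = smult r a" "r \<in> m" by blast
        then show thesis by (rule c1)
      next
        assume "b \<in> (\<Union>V\<in>{V. subgroup V (S \<times>\<times> S) \<and> V \<subset> U}. trace S \<sigma> U V ` fixpts S \<sigma> V)"
        then obtain V where "V \<in> {V. subgroup V (S \<times>\<times> S) \<and> V \<subset> U}" "b \<in> trace S \<sigma> U V ` fixpts S \<sigma> V"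
          by (rule UN_E)
        then show thesis using c2 by blast
      qed
    qed
    then show ?thesis
    proof cases
      case sm then show ?thesis using coord_smult[OF B y] m_multr by simp
    next
      case tr
      then have "coord Z b y = of_nat (card (cosets U V)) * coord Z a y"
        using trace_coord[OF B Z U _ _ y fx] by auto
      moreover have "(of_nat (card (cosets U V)) :: 'o) \<in> m" using of_nat_dvd_m cosets_card[OF U tr(1,2)] by blast
      ultimately show ?thesis using m_multr by simp
    qed
  qed
  have spanm: "coord Z x y \<in> m" if x: "x \<in> ospan smult X" for x
  proof -
    obtain F c where F: "finite F" "F \<subseteq> X" "x = (\<Sum>b\<in>F. smult (c b) b)" using x unfolding ospan_def by blast
    then have "coord Z x y = (\<Sum>b\<in>F. c b * coord Z b y)" using coord_lin[OF B y] by simp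
    also have "\<dots> \<in> m" using F Xm m_multl by (intro m_sum) blast
    finally show ?thesis .
  qed
  have "y \<in> fixpts S \<sigma> U" unfolding fixpts_def using fx by blast
  moreover have "y \<notin> ospan smult X"
  proof
    assume "y \<in> ospan smult X"
    then have "coord Z y y \<in> m" by (rule spanm)
    then show False using coord_base[OF B y y] one_notin_m by simp
  qed
  ultimately show ?thesis unfolding brauer_nonzero_def X_def by blast
qed

end

context main begin

lemma orb_sub: "ginv Z \<Longrightarrow> U \<subseteq> carrier G \<Longrightarrow> y \<in> Z \<Longrightarrow> orb U y \<subseteq> Z"
  unfolding orb_def ginv_def by blast

lemma orb_self: "subgroup U G \<Longrightarrow> y \<in> orb U y"
  unfolding orb_def using act_one subgroup.one_closed by (metis image_eqI)

lemma orb_eq: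
  assumes U: "subgroup U G" and x: "x \<in> orb U y" shows "orb U x = orb U y"
proof -
  obtain g where g: "g \<in> U" "x = ac g y" using x unfolding orb_def by blast
  have gc: "g \<in> carrier G" using g subgroup.subset[OF U] by blast
  show ?thesis
  proof
    show "orb U x \<subseteq> orb U y"
    proof
      fix w assume "w \<in> orb U x"
      then obtain h where h: "h \<in> U" "w = ac h x" unfolding orb_def by blast
      have hc: "h \<in> carrier G" using h subgroup.subset[OF U] by blast
      have "w = ac (h \<otimes>\<^bsub>G\<^esub> g) y" using act_mult[OF hc gc] h g by simp
      moreover have "h \<otimes>\<^bsub>G\<^esub> g \<in> U" by (rule subgroup.m_closed[OF U h(1) g(1)])
      ultimately show "w \<in> orb U y" unfolding orb_def by blast
    qed
    show "orb U y \<subseteq> orb U x"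
    proof
      fix w assume "w \<in> orb U y"
      then obtain h where h: "h \<in> U" "w = ac h y" unfolding orb_def by blast
      have hc: "h \<in> carrier G" using h subgroup.subset[OF U] by blast
      have igU: "inv\<^bsub>G\<^esub> g \<in> U" using g U by (simp add: subgroup.m_inv_closed del: carrier_DirProd)
      have igc: "inv\<^bsub>G\<^esub> g \<in> carrier G" using igU subgroup.subset[OF U] by blast
      have "w = ac h (ac (inv\<^bsub>G\<^esub> g) x)" using h g act_inv[OF gc] by simp
      also have "\<dots> = ac (h \<otimes>\<^bsub>G\<^esub> inv\<^bsub>G\<^esub> g) x" using act_mult[OF hc igc] by simp
      finally have "w = ac (h \<otimes>\<^bsub>G\<^esub> inv\<^bsub>G\<^esub> g) x" .
      moreover have "h \<otimes>\<^bsub>G\<^esub> inv\<^bsub>G\<^esub> g \<in> U" by (rule subgroup.m_closed[OF U h(1) igU])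
      ultimately show "w \<in> orb U x" unfolding orb_def by blast
    qed
  qed
qed

lemma trace_orbit:
  assumes U: "subgroup U G"
  shows "trace S \<sigma> U (stab U y) y = (\<Sum>w\<in>orb U y. w)"
proof -
  define V where "V = stab U y"
  have V: "subgroup V G" unfolding V_def by (rule stab_subgroup[OF U])
  have VU: "V \<subseteq> U" unfolding V_def stab_def by auto
  define \<Phi> where "\<Phi> C = ac (SOME x. x \<in> C) y" for C
  have \<Phi>val: "\<Phi> (u <#\<^bsub>G\<^esub> V) = ac u y" if u: "u \<in> U" for u
  proof -
    obtain v where v: "v \<in> V" "(SOME x. x \<in> u <#\<^bsub>G\<^esub> V) = u \<otimes>\<^bsub>G\<^esub> v" using rep_coset[OF U V VU u] by blast
    have uc: "u \<in> carrier G" using u subgroup.subset[OF U] by blast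
    have vc: "v \<in> carrier G" using v VU subgroup.subset[OF U] by blast
    have "ac v y = y" using v unfolding V_def stab_def by blast
    then show ?thesis unfolding \<Phi>_def v(2) using act_mult[OF uc vc] by simp
  qed
  have bij: "bij_betw \<Phi> (cosets U V) (orb U y)"
    unfolding bij_betw_def
  proof
    show "inj_on \<Phi> (cosets U V)"
    proof (rule inj_onI)
      fix C1 C2 assume C: "C1 \<in> cosets U V" "C2 \<in> cosets U V" "\<Phi> C1 = \<Phi> C2"
      obtain u1 where u1: "u1 \<in> U" "C1 = u1 <#\<^bsub>G\<^esub> V" using C(1) unfolding cosets_def by blast
      obtain u2 where u2: "u2 \<in> U" "C2 = u2 <#\<^bsub>G\<^esub> V" using C(2) unfolding cosets_def by blast
      have u1c: "u1 \<in> carrier G" and u2c: "u2 \<in> carrier G" using u1 u2 subgroup.subset[OF U] by auto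
      have eq: "ac u1 y = ac u2 y" using C(3) \<Phi>val u1 u2 by simp
      have iu2: "inv\<^bsub>G\<^esub> u2 \<in> carrier G" by (rule group.inv_closed[OF grpG u2c])
      define w where "w = inv\<^bsub>G\<^esub> u2 \<otimes>\<^bsub>G\<^esub> u1"
      have wU: "w \<in> U" unfolding w_def using u1 u2 U
        by (simp add: subgroup.m_inv_closed subgroup.m_closed del: carrier_DirProd)
      have "ac w y = ac (inv\<^bsub>G\<^esub> u2) (ac u1 y)" unfolding w_def by (rule act_mult[OF iu2 u1c])
      also have "\<dots> = y" unfolding eq by (rule act_inv[OF u2c])
      finally have "w \<in> V" using wU unfolding V_def stab_def by blast
      moreover have "u2 \<otimes>\<^bsub>G\<^esub> w = u1"
      proof -
        have "u2 \<otimes>\<^bsub>G\<^esub> w = (u2 \<otimes>\<^bsub>G\<^esub> inv\<^bsub>G\<^esub> u2) \<otimes>\<^bsub>G\<^esub> u1" unfolding w_def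
          by (rule monoid.m_assoc[OF group.is_monoid[OF grpG] u2c iu2 u1c, symmetric])
        also have "\<dots> = \<one>\<^bsub>G\<^esub> \<otimes>\<^bsub>G\<^esub> u1" by (simp only: group.r_inv[OF grpG u2c])
        also have "\<dots> = u1" by (rule monoid.l_one[OF group.is_monoid[OF grpG] u1c])
        finally show ?thesis .
      qed
      ultimately have "u1 \<in> u2 <#\<^bsub>G\<^esub> V" unfolding l_coset_def by blast
      then show "C1 = C2" unfolding u1 u2 using group.l_repr_independence[OF grpG _ u2c V] by metis
    qed
    show "\<Phi> ` cosets U V = orb U y"
    proof
      show "\<Phi> ` cosets U V \<subseteq> orb U y" unfolding cosets_def orb_def using \<Phi>val by auto
      show "orb U y \<subseteq> \<Phi> ` cosets U V"
      proof
        fix w assume "w \<in> orb U y"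
        then obtain u where "u \<in> U" "w = ac u y" unfolding orb_def by blast
        then show "w \<in> \<Phi> ` cosets U V" unfolding cosets_def using \<Phi>val by (metis image_eqI)
      qed
    qed
  qed
  have "trace S \<sigma> U V y = (\<Sum>C\<in>cosets U V. \<Phi> C)" unfolding trace_cosets \<Phi>_def ..
  also have "\<dots> = (\<Sum>w\<in>orb U y. w)" by (rule sum.reindex_bij_betw[OF bij])
  finally show ?thesis unfolding V_def .
qed

lemma FW:
  assumes B: "is_obasis smult Y" and Y: "ginv Y" and U: "subgroup U G"
    and bn: "brauer_nonzero smult m S \<sigma> U"
  shows "\<exists>y\<in>Y. \<forall>g\<in>U. ac g y = y"
proof (rule ccontr)
  assume "\<not> (\<exists>y\<in>Y. \<forall>g\<in>U. ac g y = y)"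
  then have nf: "\<And>y. y \<in> Y \<Longrightarrow> \<exists>g\<in>U. ac g y \<noteq> y" by blast
  have Uc: "U \<subseteq> carrier G" using subgroup.subset[OF U] .
  have finY: "finite Y" by (rule basis_finite[OF B])
  define X where "X = {smult r a | r a. r \<in> m \<and> a \<in> fixpts S \<sigma> U} \<union>
           (\<Union>V\<in>{V. subgroup V (S \<times>\<times> S) \<and> V \<subset> U}. trace S \<sigma> U V ` fixpts S \<sigma> V)"
  have "fixpts S \<sigma> U \<subseteq> ospan smult X"
  proof
    fix a assume a: "a \<in> fixpts S \<sigma> U"
    have cst: "coord Y a (ac g y) = coord Y a y" if g: "g \<in> U" and y: "y \<in> Y" for g y
    proof -
      have gc: "g \<in> carrier G" using g Uc by blast
      have igU: "inv\<^bsub>G\<^esub> g \<in> U" using g U by (simp add: subgroup.m_inv_closed del: carrier_DirProd)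
      have igc: "inv\<^bsub>G\<^esub> g \<in> carrier G" using igU Uc by blast
      have "ac (inv\<^bsub>G\<^esub> g) a = a" using a igU unfolding fixpts_def by blast
      then have "coord Y a y = coord Y a (ac (inv\<^bsub>G\<^esub> (inv\<^bsub>G\<^esub> g)) y)"
        using coord_act[OF B Y igc y, of a] by simp
      also have "inv\<^bsub>G\<^esub> (inv\<^bsub>G\<^esub> g) = g" using group.inv_inv[OF grpG gc] .
      finally show ?thesis by simp
    qed
    have "a = (\<Sum>y\<in>Y. smult (coord Y a y) y)" by (rule coord_repr[OF B])
    also have "\<dots> = (\<Sum>Q\<in>orb U ` Y. \<Sum>x\<in>{x. x \<in> Y \<and> orb U x = Q}. smult (coord Y a x) x)"
      by (rule sum.image_gen[OF finY])
    also have "\<dots> \<in> ospan smult X"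
    proof (rule ospan_sum)
      fix Q assume "Q \<in> orb U ` Y"
      then obtain y0 where y0: "y0 \<in> Y" "Q = orb U y0" by blast
      have oY: "orb U y0 \<subseteq> Y" by (rule orb_sub[OF Y Uc y0(1)])
      have setQ: "{x. x \<in> Y \<and> orb U x = Q} = orb U y0"
      proof
        show "{x. x \<in> Y \<and> orb U x = Q} \<subseteq> orb U y0" using orb_self[OF U] y0 by blast
        show "orb U y0 \<subseteq> {x. x \<in> Y \<and> orb U x = Q}" using oY orb_eq[OF U] y0 by blast
      qed
      have "(\<Sum>x\<in>orb U y0. smult (coord Y a x) x) = (\<Sum>x\<in>orb U y0. smult (coord Y a y0) x)"
      proof (rule sum.cong)
        fix x assume "x \<in> orb U y0"
        then obtain g where "g \<in> U" "x = ac g y0" unfolding orb_def by blast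
        then show "smult (coord Y a x) x = smult (coord Y a y0) x" using cst y0 by simp
      qed simp
      also have "\<dots> = smult (coord Y a y0) (trace S \<sigma> U (stab U y0) y0)"
        by (simp add: trace_orbit[OF U] sm_sum)
      finally have eq: "(\<Sum>x\<in>{x. x \<in> Y \<and> orb U x = Q}. smult (coord Y a x) x)
                        = smult (coord Y a y0) (trace S \<sigma> U (stab U y0) y0)" unfolding setQ .
      have "trace S \<sigma> U (stab U y0) y0 \<in> X"
      proof -
        have "subgroup (stab U y0) G" by (rule stab_subgroup[OF U])
        moreover have "stab U y0 \<subset> U" using nf[OF y0(1)] unfolding stab_def by blast
        moreover have "y0 \<in> fixpts S \<sigma> (stab U y0)" unfolding fixpts_def stab_def by blast
        ultimately show ?thesis unfolding X_def by blast
      qed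
      then show "(\<Sum>x\<in>{x. x \<in> Y \<and> orb U x = Q}. smult (coord Y a x) x) \<in> ospan smult X"
        unfolding eq by (intro ospan_smult ospan_base)
    qed
    finally show "a \<in> ospan smult X" .
  qed
  then show False using bn unfolding brauer_nonzero_def X_def by blast
qed

lemma delta_subgroup:
  assumes P: "subgroup P S" and \<phi>: "\<phi> \<in> hom (S\<lparr>carrier := P\<rparr>) S"
  shows "subgroup (Delta \<phi> P) G"
proof -
  have gP: "group (S\<lparr>carrier := P\<rparr>)" by (rule subgroup.subgroup_is_group[OF P grp])
  interpret h: group_hom "S\<lparr>carrier := P\<rparr>" S \<phi>
    by (rule group_hom.intro[OF gP grp]) (simp add: group_hom_axioms_def \<phi>)
  have Pc: "P \<subseteq> carrier S" using subgroup.subset[OF P] .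
  have \<phi>c: "x \<in> P \<Longrightarrow> \<phi> x \<in> carrier S" for x using h.hom_closed by simp
  show ?thesis
  proof
    show "Delta \<phi> P \<subseteq> carrier G" unfolding Delta_def using Pc \<phi>c by auto
  next
    fix a b assume "a \<in> Delta \<phi> P" "b \<in> Delta \<phi> P"
    then obtain x y where xy: "x \<in> P" "y \<in> P" "a = (\<phi> x, x)" "b = (\<phi> y, y)" unfolding Delta_def by blast
    have "\<phi> (x \<otimes>\<^bsub>S\<^esub> y) = \<phi> x \<otimes>\<^bsub>S\<^esub> \<phi> y" using h.hom_mult[of x y] xy by simp
    moreover have "x \<otimes>\<^bsub>S\<^esub> y \<in> P" using subgroup.m_closed[OF P xy(1,2)] .
    ultimately show "a \<otimes>\<^bsub>G\<^esub> b \<in> Delta \<phi> P" unfolding Delta_def xy by force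
  next
    have "\<phi> \<one>\<^bsub>S\<^esub> = \<one>\<^bsub>S\<^esub>" using h.hom_one by simp
    moreover have "\<one>\<^bsub>S\<^esub> \<in> P" using subgroup.one_closed[OF P] .
    ultimately show "\<one>\<^bsub>G\<^esub> \<in> Delta \<phi> P" unfolding Delta_def by force
  next
    fix a assume "a \<in> Delta \<phi> P"
    then obtain x where x: "x \<in> P" "a = (\<phi> x, x)" unfolding Delta_def by blast
    have ic: "inv\<^bsub>S\<lparr>carrier := P\<rparr>\<^esub> x = inv\<^bsub>S\<^esub> x" using group.m_inv_consistent[OF grp P x(1)] .
    have "\<phi> (inv\<^bsub>S\<^esub> x) = inv\<^bsub>S\<^esub> (\<phi> x)" using h.hom_inv[of x] x ic by simp
    moreover have "inv\<^bsub>S\<^esub> x \<in> P" using subgroup.m_inv_closed[OF P x(1)] .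
    moreover have "inv\<^bsub>G\<^esub> a = (inv\<^bsub>S\<^esub> (\<phi> x), inv\<^bsub>S\<^esub> x)" using inv_G[of a] x \<phi>c Pc by auto
    ultimately show "inv\<^bsub>G\<^esub> a \<in> Delta \<phi> P" unfolding Delta_def by force
  qed
qed

end

context main begin

lemma \<sigma>c_mult: "s \<in> carrier S \<Longrightarrow> t \<in> carrier S \<Longrightarrow> \<sigma> (s \<otimes>\<^bsub>S\<^esub> t) = \<sigma> s * \<sigma> t" by (rule \<sigma>m)

lemma act_pair: "ac (s, t) a = \<sigma> s * a * \<sigma> (inv\<^bsub>S\<^esub> t)" unfolding act_def by simp

lemma act_fix_iff:
  assumes t: "t \<in> carrier S"
  shows "ac (s, t) a = a \<longleftrightarrow> \<sigma> s * a = a * \<sigma> t"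
proof
  assume "ac (s, t) a = a"
  then have "\<sigma> s * a * \<sigma> (inv\<^bsub>S\<^esub> t) * \<sigma> t = a * \<sigma> t" unfolding act_pair by simp
  then show "\<sigma> s * a = a * \<sigma> t" using \<sigma>inv'[OF t] by (simp add: mult.assoc)
next
  assume "\<sigma> s * a = a * \<sigma> t"
  then have "\<sigma> s * a * \<sigma> (inv\<^bsub>S\<^esub> t) = a * (\<sigma> t * \<sigma> (inv\<^bsub>S\<^esub> t))" by (simp add: mult.assoc)
  then show "ac (s, t) a = a" unfolding act_pair using \<sigma>inv[OF t] by simp
qed

context
  fixes y :: 'a
  assumes lfree: "\<And>s. s \<in> carrier S \<Longrightarrow> \<sigma> s * y = y \<Longrightarrow> s = \<one>\<^bsub>S\<^esub>"
    and rfree: "\<And>s. s \<in> carrier S \<Longrightarrow> y * \<sigma> s = y \<Longrightarrow> s = \<one>\<^bsub>S\<^esub>"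
begin

lemma luniq:
  assumes s: "s \<in> carrier S" and s': "s' \<in> carrier S" and eq: "\<sigma> s * y = \<sigma> s' * y"
  shows "s = s'"
proof -
  have is': "inv\<^bsub>S\<^esub> s' \<in> carrier S" using s' grp by (simp add: group.inv_closed)
  have "\<sigma> (inv\<^bsub>S\<^esub> s' \<otimes>\<^bsub>S\<^esub> s) * y = \<sigma> (inv\<^bsub>S\<^esub> s') * (\<sigma> s * y)" using \<sigma>m[OF is' s] by (simp add: mult.assoc)
  also have "\<dots> = y" unfolding eq using \<sigma>inv'[OF s'] by (simp add: mult.assoc[symmetric])
  finally have "inv\<^bsub>S\<^esub> s' \<otimes>\<^bsub>S\<^esub> s = \<one>\<^bsub>S\<^esub>" using lfree is' s grp by (simp add: monoid.m_closed group.is_monoid)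
  then have "inv\<^bsub>S\<^esub> s = inv\<^bsub>S\<^esub> s'" by (rule group.inv_equality[OF grp _ s is'])
  then show ?thesis using group.inv_inv[OF grp s] group.inv_inv[OF grp s'] by metis
qed

lemma runiq:
  assumes t: "t \<in> carrier S" and t': "t' \<in> carrier S" and eq: "y * \<sigma> t = y * \<sigma> t'"
  shows "t = t'"
proof -
  have it': "inv\<^bsub>S\<^esub> t' \<in> carrier S" using t' grp by (simp add: group.inv_closed)
  have "y * \<sigma> (t \<otimes>\<^bsub>S\<^esub> inv\<^bsub>S\<^esub> t') = (y * \<sigma> t) * \<sigma> (inv\<^bsub>S\<^esub> t')" using \<sigma>m[OF t it'] by (simp add: mult.assoc)
  also have "\<dots> = y" unfolding eq using \<sigma>inv[OF t'] by (simp add: mult.assoc)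
  finally have "t \<otimes>\<^bsub>S\<^esub> inv\<^bsub>S\<^esub> t' = \<one>\<^bsub>S\<^esub>" using rfree it' t grp by (simp add: monoid.m_closed group.is_monoid)
  then have "inv\<^bsub>S\<^esub> (inv\<^bsub>S\<^esub> t') = t" by (rule group.inv_equality[OF grp _ it' t])
  then show ?thesis using group.inv_inv[OF grp t'] by simp
qed

definition PP :: "'g set" where "PP = {t \<in> carrier S. \<exists>s\<in>carrier S. \<sigma> s * y = y * \<sigma> t}"
definition ph :: "'g \<Rightarrow> 'g" where "ph t = (SOME s. s \<in> carrier S \<and> \<sigma> s * y = y * \<sigma> t)"

lemma ph_spec: "t \<in> PP \<Longrightarrow> ph t \<in> carrier S \<and> \<sigma> (ph t) * y = y * \<sigma> t"
  unfolding PP_def ph_def by (rule someI_ex) blast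

lemma ph_eq: "t \<in> PP \<Longrightarrow> s \<in> carrier S \<Longrightarrow> \<sigma> s * y = y * \<sigma> t \<Longrightarrow> ph t = s"
proof -
  assume t: "t \<in> PP" and s: "s \<in> carrier S" and eq: "\<sigma> s * y = y * \<sigma> t"
  have "\<sigma> (ph t) * y = \<sigma> s * y" using ph_spec[OF t] eq by simp
  then show "ph t = s" using luniq ph_spec[OF t] s by blast
qed

lemma PP_sub: "subgroup PP S"
proof
  show "PP \<subseteq> carrier S" unfolding PP_def by auto
next
  fix x z assume "x \<in> PP" "z \<in> PP"
  then obtain a b where ab: "x \<in> carrier S" "z \<in> carrier S" "a \<in> carrier S" "b \<in> carrier S"
    "\<sigma> a * y = y * \<sigma> x" "\<sigma> b * y = y * \<sigma> z" unfolding PP_def by blast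
  have "\<sigma> (a \<otimes>\<^bsub>S\<^esub> b) * y = \<sigma> a * (\<sigma> b * y)" using ab by (simp add: \<sigma>m mult.assoc)
  also have "\<dots> = (\<sigma> a * y) * \<sigma> z" by (simp only: ab(6) mult.assoc)
  also have "\<dots> = (y * \<sigma> x) * \<sigma> z" using ab(5) by simp
  also have "\<dots> = y * \<sigma> (x \<otimes>\<^bsub>S\<^esub> z)" using ab by (simp add: \<sigma>m mult.assoc)
  finally have "\<sigma> (a \<otimes>\<^bsub>S\<^esub> b) * y = y * \<sigma> (x \<otimes>\<^bsub>S\<^esub> z)" .
  then show "x \<otimes>\<^bsub>S\<^esub> z \<in> PP" unfolding PP_def using ab grp by (auto simp: monoid.m_closed group.is_monoid)
next
  have oc: "\<one>\<^bsub>S\<^esub> \<in> carrier S" using grp by (simp add: monoid.one_closed group.is_monoid)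
  moreover have "\<sigma> \<one>\<^bsub>S\<^esub> * y = y * \<sigma> \<one>\<^bsub>S\<^esub>" using \<sigma>1 by simp
  ultimately show "\<one>\<^bsub>S\<^esub> \<in> PP" unfolding PP_def by blast
next
  fix x assume "x \<in> PP"
  then obtain a where a: "x \<in> carrier S" "a \<in> carrier S" "\<sigma> a * y = y * \<sigma> x" unfolding PP_def by blast
  have ia: "inv\<^bsub>S\<^esub> a \<in> carrier S" and ix: "inv\<^bsub>S\<^esub> x \<in> carrier S" using a grp by (auto simp: group.inv_closed)
  have "y * \<sigma> (inv\<^bsub>S\<^esub> x) = (\<sigma> (inv\<^bsub>S\<^esub> a) * \<sigma> a) * y * \<sigma> (inv\<^bsub>S\<^esub> x)"
    using \<sigma>inv'[OF a(2)] by simp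
  also have "\<dots> = \<sigma> (inv\<^bsub>S\<^esub> a) * (\<sigma> a * y) * \<sigma> (inv\<^bsub>S\<^esub> x)" by (simp only: mult.assoc)
  also have "\<dots> = \<sigma> (inv\<^bsub>S\<^esub> a) * y * (\<sigma> x * \<sigma> (inv\<^bsub>S\<^esub> x))" using a(3) by (simp only: mult.assoc)
  also have "\<dots> = \<sigma> (inv\<^bsub>S\<^esub> a) * y" using \<sigma>inv[OF a(1)] by simp
  finally have "y * \<sigma> (inv\<^bsub>S\<^esub> x) = \<sigma> (inv\<^bsub>S\<^esub> a) * y" .
  then show "inv\<^bsub>S\<^esub> x \<in> PP" unfolding PP_def using ia ix by auto
qed

lemma stab_delta: "stab (carrier G) y = Delta ph PP"
proof
  show "stab (carrier G) y \<subseteq> Delta ph PP"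
  proof
    fix g assume g: "g \<in> stab (carrier G) y"
    obtain s t where st: "g = (s, t)" by (cases g)
    have c: "s \<in> carrier S" "t \<in> carrier S" using g st unfolding stab_def by auto
    have eq: "\<sigma> s * y = y * \<sigma> t" using g act_fix_iff[OF c(2)] unfolding stab_def st by auto
    then have tP: "t \<in> PP" unfolding PP_def using c by auto
    have "ph t = s" by (rule ph_eq[OF tP c(1) eq])
    then show "g \<in> Delta ph PP" unfolding Delta_def st using tP by auto
  qed
  show "Delta ph PP \<subseteq> stab (carrier G) y"
  proof
    fix g assume "g \<in> Delta ph PP"
    then obtain t where t: "t \<in> PP" "g = (ph t, t)" unfolding Delta_def by blast
    have tc: "t \<in> carrier S" using t unfolding PP_def by auto
    show "g \<in> stab (carrier G) y" unfolding stab_def t(2) using ph_spec[OF t(1)] tc act_fix_iff[OF tc] by auto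
  qed
qed

lemma ph_hom: "ph \<in> hom (S\<lparr>carrier := PP\<rparr>) S"
proof (rule homI)
  fix x assume "x \<in> carrier (S\<lparr>carrier := PP\<rparr>)"
  then show "ph x \<in> carrier S" using ph_spec by simp
next
  fix x z assume xz: "x \<in> carrier (S\<lparr>carrier := PP\<rparr>)" "z \<in> carrier (S\<lparr>carrier := PP\<rparr>)"
  then have xz': "x \<in> PP" "z \<in> PP" by auto
  have c: "x \<in> carrier S" "z \<in> carrier S" using xz' unfolding PP_def by auto
  have xzP: "x \<otimes>\<^bsub>S\<^esub> z \<in> PP" using subgroup.m_closed[OF PP_sub xz'] .
  have sp: "ph x \<in> carrier S" "ph z \<in> carrier S" "\<sigma> (ph x) * y = y * \<sigma> x" "\<sigma> (ph z) * y = y * \<sigma> z"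
    using ph_spec[OF xz'(1)] ph_spec[OF xz'(2)] by auto
  have "\<sigma> (ph x \<otimes>\<^bsub>S\<^esub> ph z) * y = \<sigma> (ph x) * (\<sigma> (ph z) * y)" using sp by (simp add: \<sigma>m mult.assoc)
  also have "\<dots> = (\<sigma> (ph x) * y) * \<sigma> z" by (simp only: sp(4) mult.assoc)
  also have "\<dots> = (y * \<sigma> x) * \<sigma> z" using sp(3) by simp
  also have "\<dots> = y * \<sigma> (x \<otimes>\<^bsub>S\<^esub> z)" using c by (simp add: \<sigma>m mult.assoc)
  finally have "\<sigma> (ph x \<otimes>\<^bsub>S\<^esub> ph z) * y = y * \<sigma> (x \<otimes>\<^bsub>S\<^esub> z)" .
  then have "ph (x \<otimes>\<^bsub>S\<^esub> z) = ph x \<otimes>\<^bsub>S\<^esub> ph z"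
    using ph_eq[OF xzP] sp grp by (simp add: monoid.m_closed group.is_monoid)
  then show "ph (x \<otimes>\<^bsub>S\<lparr>carrier := PP\<rparr>\<^esub> z) = ph x \<otimes>\<^bsub>S\<^esub> ph z" by simp
qed

lemma ph_inj: "inj_on ph PP"
proof (rule inj_onI)
  fix x z assume xz: "x \<in> PP" "z \<in> PP" "ph x = ph z"
  have c: "x \<in> carrier S" "z \<in> carrier S" using xz unfolding PP_def by auto
  have "y * \<sigma> x = y * \<sigma> z" using ph_spec[OF xz(1)] ph_spec[OF xz(2)] xz(3) by simp
  then show "x = z" by (rule runiq[OF c])
qed

lemma twfix_fix: "a \<in> twfix S \<sigma> ph PP \<Longrightarrow> g \<in> Delta ph PP \<Longrightarrow> ac g a = a"
proof -
  assume a: "a \<in> twfix S \<sigma> ph PP" and "g \<in> Delta ph PP"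
  then obtain t where t: "t \<in> PP" "g = (ph t, t)" unfolding Delta_def by blast
  have tc: "t \<in> carrier S" using t unfolding PP_def by auto
  show ?thesis unfolding t(2) using act_fix_iff[OF tc] a t(1) unfolding twfix_def by auto
qed

end

end

context main begin

lemma STEP:
  assumes B: "is_obasis smult Z" and Zi: "ginv Z" and yZ: "y \<in> Z" and ynu: "y \<notin> unitsA"
    and lfree: "\<And>s. s \<in> carrier S \<Longrightarrow> \<sigma> s * y = y \<Longrightarrow> s = \<one>\<^bsub>S\<^esub>"
    and rfree: "\<And>s. s \<in> carrier S \<Longrightarrow> y * \<sigma> s = y \<Longrightarrow> s = \<one>\<^bsub>S\<^esub>"
    and H: "\<forall>P \<phi>. subgroup P S \<longrightarrow> \<phi> \<in> fusion_hom smult m S \<sigma> P \<longrightarrow> unitsA \<inter> twfix S \<sigma> \<phi> P \<noteq> {}"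
  shows "\<exists>Z'. is_obasis smult Z' \<and> ginv Z' \<and> Z' - unitsA \<subseteq> (Z - unitsA) - {y}"
proof -
  define U where "U = Delta (ph y) (PP y)"
  have sd: "stab (carrier G) y = U" unfolding U_def by (rule stab_delta[OF lfree rfree])
  have CG: "subgroup (carrier G) G" by (rule group.subgroup_self[OF grpG])
  have Usub: "subgroup U G" unfolding sd[symmetric] by (rule stab_subgroup[OF CG])
  have Uc: "U \<subseteq> carrier G" using subgroup.subset[OF Usub] .
  have fixU: "\<forall>g\<in>U. ac g y = y" unfolding sd[symmetric] stab_def by blast
  have bn: "brauer_nonzero smult m S \<sigma> U" by (rule BN[OF B Zi Usub yZ fixU])
  have "ph y \<in> fusion_hom smult m S \<sigma> (PP y)"
    unfolding fusion_hom_def using ph_hom[OF lfree rfree] ph_inj[OF lfree rfree] bn unfolding U_def by blast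
  then obtain u where u: "u \<in> unitsA" "u \<in> twfix S \<sigma> (ph y) (PP y)" using H PP_sub[OF lfree rfree] by blast
  have ufix: "ac g u = u" if "g \<in> U" for g using twfix_fix[OF lfree rfree u(2)] that unfolding U_def by blast
  obtain ui where ui: "u * ui = 1" "ui * u = 1" using u(1) unfolding unitsA_def by blast
  define x where "x = y * ui"
  obtain R1 where R1: "finite R1" "\<forall>\<mu>. (\<forall>r\<in>R1. \<mu> - r \<notin> m) \<longrightarrow> x + smult \<mu> 1 \<in> unitsA"
    using unit_generic[OF B, of x] by blast
  define Ob where "Ob = orb (carrier G) y"
  have ObZ: "Ob \<subseteq> Z" unfolding Ob_def by (rule orb_sub[OF Zi _ yZ]) simp
  define h where "h w = ac (SOME g. g \<in> carrier G \<and> ac g y = w) u" for w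
  obtain R2 where R2: "finite R2" "\<forall>\<mu>. (\<forall>r\<in>R2. \<mu> - r \<notin> m) \<longrightarrow>
            is_obasis smult ((Z - Ob) \<union> (\<lambda>w. w + smult \<mu> (h w)) ` Ob)"
    using replace_basis[OF B ObZ, of h] by blast
  obtain \<mu> where \<mu>: "\<forall>r\<in>R1 \<union> R2. \<mu> - r \<notin> m" using infinite_residues[of "R1 \<union> R2"] R1 R2 by blast
  define z where "z = y + smult \<mu> u"
  have "z = (x + smult \<mu> 1) * u"
  proof -
    have "(x + smult \<mu> 1) * u = y * (ui * u) + smult \<mu> 1 * u" unfolding x_def by (simp add: distrib_right mult.assoc)
    also have "\<dots> = z" unfolding z_def using ui(2) sm_1l[of \<mu> u] by simp
    finally show ?thesis by simp
  qed
  then have zu: "z \<in> unitsA" using R1 \<mu> u(1) units_mult by auto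
  define f where "f w = w + smult \<mu> (h w)" for w
  have fval: "f (ac g y) = ac g z" if g: "g \<in> carrier G" for g
  proof -
    define g' where "g' = (SOME g'. g' \<in> carrier G \<and> ac g' y = ac g y)"
    have g': "g' \<in> carrier G \<and> ac g' y = ac g y" unfolding g'_def by (rule someI[of _ g]) (use g in simp)
    have ig: "inv\<^bsub>G\<^esub> g \<in> carrier G" by (rule group.inv_closed[OF grpG g])
    define w0 where "w0 = inv\<^bsub>G\<^esub> g \<otimes>\<^bsub>G\<^esub> g'"
    have w0c: "w0 \<in> carrier G" unfolding w0_def using ig g' by (rule_tac monoid.m_closed[OF group.is_monoid[OF grpG]]) auto
    have "ac w0 y = ac (inv\<^bsub>G\<^esub> g) (ac g' y)" unfolding w0_def using act_mult[OF ig] g' by blast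
    also have "\<dots> = y" using g' act_inv[OF g] by simp
    finally have "w0 \<in> U" using w0c sd unfolding stab_def by blast
    then have "ac w0 u = u" by (rule ufix)
    moreover have "g' = g \<otimes>\<^bsub>G\<^esub> w0"
    proof -
      have "g \<otimes>\<^bsub>G\<^esub> w0 = (g \<otimes>\<^bsub>G\<^esub> inv\<^bsub>G\<^esub> g) \<otimes>\<^bsub>G\<^esub> g'" unfolding w0_def
        using g' by (rule_tac monoid.m_assoc[OF group.is_monoid[OF grpG] g ig, symmetric]) auto
      also have "\<dots> = \<one>\<^bsub>G\<^esub> \<otimes>\<^bsub>G\<^esub> g'" by (simp only: group.r_inv[OF grpG g])
      also have "\<dots> = g'" using g' by (rule_tac monoid.l_one[OF group.is_monoid[OF grpG]]) auto
      finally show ?thesis by simp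
    qed
    ultimately have "ac g' u = ac g u" using act_mult[OF g w0c] by simp
    then have "h (ac g y) = ac g u" unfolding h_def g'_def by simp
    then show ?thesis unfolding f_def z_def by (simp add: act_add act_smult)
  qed
  define Z' where "Z' = (Z - Ob) \<union> f ` Ob"
  have BZ': "is_obasis smult Z'" unfolding Z'_def f_def using R2 \<mu> by blast
  have fOb: "f ` Ob \<subseteq> unitsA"
  proof
    fix w assume "w \<in> f ` Ob"
    then obtain g where "g \<in> carrier G" "w = f (ac g y)" unfolding Ob_def orb_def by blast
    then show "w \<in> unitsA" using fval act_unit zu by simp
  qed
  have giZ': "ginv Z'" unfolding ginv_def
  proof (intro ballI)
    fix g w assume g: "g \<in> carrier G" and w: "w \<in> Z'"
    show "ac g w \<in> Z'"
    proof (cases "w \<in> Z - Ob")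
      case True
      then have "ac g w \<in> Z" using Zi g unfolding ginv_def by blast
      moreover have "ac g w \<notin> Ob"
      proof
        assume "ac g w \<in> Ob"
        then obtain g' where g': "g' \<in> carrier G" "ac g w = ac g' y" unfolding Ob_def orb_def by blast
        have ig: "inv\<^bsub>G\<^esub> g \<in> carrier G" by (rule group.inv_closed[OF grpG g])
        have "w = ac (inv\<^bsub>G\<^esub> g) (ac g' y)" using act_inv[OF g, of w] g' by simp
        also have "\<dots> = ac (inv\<^bsub>G\<^esub> g \<otimes>\<^bsub>G\<^esub> g') y" using act_mult[OF ig g'(1)] by simp
        finally have "w \<in> Ob" unfolding Ob_def orb_def
          using monoid.m_closed[OF group.is_monoid[OF grpG] ig g'(1)] by blast
        then show False using True by blast
      qed
      ultimately show ?thesis unfolding Z'_def by blast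
    next
      case False
      then obtain g' where g': "g' \<in> carrier G" "w = f (ac g' y)" using w unfolding Z'_def Ob_def orb_def by blast
      have gg': "g \<otimes>\<^bsub>G\<^esub> g' \<in> carrier G" by (rule monoid.m_closed[OF group.is_monoid[OF grpG] g g'(1)])
      have "ac g w = ac (g \<otimes>\<^bsub>G\<^esub> g') z" using g' fval act_mult[OF g g'(1)] by simp
      also have "\<dots> = f (ac (g \<otimes>\<^bsub>G\<^esub> g') y)" using fval[OF gg'] by simp
      finally show ?thesis unfolding Z'_def Ob_def orb_def using gg' by blast
    qed
  qed
  have yOb: "y \<in> Ob" unfolding Ob_def by (rule orb_self[OF CG])
  have "Z' - unitsA \<subseteq> (Z - unitsA) - {y}" unfolding Z'_def using fOb yOb by blast
  then show ?thesis using BZ' giZ' by blast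
qed

lemma main_rev:
  assumes BY: "is_obasis smult Y" and YS: "SS_invariant S \<sigma> Y"
    and lf: "\<And>s y. s \<in> carrier S \<Longrightarrow> y \<in> Y \<Longrightarrow> \<sigma> s * y = y \<Longrightarrow> s = \<one>\<^bsub>S\<^esub>"
    and rf: "\<And>s y. s \<in> carrier S \<Longrightarrow> y \<in> Y \<Longrightarrow> y * \<sigma> s = y \<Longrightarrow> s = \<one>\<^bsub>S\<^esub>"
    and H: "\<forall>P \<phi>. subgroup P S \<longrightarrow> \<phi> \<in> fusion_hom smult m S \<sigma> P \<longrightarrow> unitsA \<inter> twfix S \<sigma> \<phi> P \<noteq> {}"
  shows "\<exists>Z. is_obasis smult Z \<and> SS_invariant S \<sigma> Z \<and> Z \<subseteq> unitsA"
proof -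
  have claim: "\<And>Z. card (Z - unitsA) = k \<Longrightarrow> is_obasis smult Z \<Longrightarrow> ginv Z \<Longrightarrow> Z - unitsA \<subseteq> Y \<Longrightarrow>
      \<exists>Z. is_obasis smult Z \<and> SS_invariant S \<sigma> Z \<and> Z \<subseteq> unitsA" for k
  proof (induction k rule: less_induct)
    case (less k)
    fix Z assume k: "card (Z - unitsA) = k" and B: "is_obasis smult Z" and Zi: "ginv Z" and ZY: "Z - unitsA \<subseteq> Y"
    show "\<exists>Z. is_obasis smult Z \<and> SS_invariant S \<sigma> Z \<and> Z \<subseteq> unitsA"
    proof (cases "Z - unitsA = {}")
      case True then show ?thesis using B ginv_SS[OF Zi] by blast
    next
      case False
      then obtain y where y: "y \<in> Z" "y \<notin> unitsA" by blast
      then have yY: "y \<in> Y" using ZY by blast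
      obtain Z' where Z': "is_obasis smult Z'" "ginv Z'" "Z' - unitsA \<subseteq> (Z - unitsA) - {y}"
        using STEP[OF B Zi y(1) y(2) lf[OF _ yY] rf[OF _ yY] H] by blast
      have fin: "finite (Z - unitsA)" using basis_finite[OF B] by simp
      have "Z' - unitsA \<subset> Z - unitsA" using Z'(3) y by blast
      then have "card (Z' - unitsA) < k" using psubset_card_mono[OF fin] k by simp
      moreover have "Z' - unitsA \<subseteq> Y" using Z'(3) ZY by blast
      ultimately show ?thesis using less.IH Z'(1,2) by blast
    qed
  qed
  show ?thesis using claim[OF refl BY SS_ginv[OF YS]] by blast
qed

lemma main_fwd:
  assumes BY: "is_obasis smult Y" and YS: "SS_invariant S \<sigma> Y" and YU: "Y \<subseteq> unitsA"
    and P: "subgroup P S" and \<phi>: "\<phi> \<in> fusion_hom smult m S \<sigma> P"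
  shows "unitsA \<inter> twfix S \<sigma> \<phi> P \<noteq> {}"
proof -
  have hom: "\<phi> \<in> hom (S\<lparr>carrier := P\<rparr>) S" and bn: "brauer_nonzero smult m S \<sigma> (Delta \<phi> P)"
    using \<phi> unfolding fusion_hom_def by auto
  have U: "subgroup (Delta \<phi> P) G" by (rule delta_subgroup[OF P hom])
  obtain y where y: "y \<in> Y" "\<forall>g\<in>Delta \<phi> P. ac g y = y" using FW[OF BY SS_ginv[OF YS] U bn] by blast
  have "y \<in> twfix S \<sigma> \<phi> P" unfolding twfix_def
  proof (intro CollectI ballI)
    fix t assume t: "t \<in> P"
    then have tc: "t \<in> carrier S" using subgroup.subset[OF P] by blast
    have "(\<phi> t, t) \<in> Delta \<phi> P" unfolding Delta_def using t by blast
    then have "ac (\<phi> t, t) y = y" using y by blast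
    then show "\<sigma> (\<phi> t) * y = y * \<sigma> t" using act_fix_iff[OF tc] by blast
  qed
  then show ?thesis using y YU by blast
qed

end

theorem proposition4p7:
  fixes smult :: "'o::idom \<Rightarrow> 'a::{ring,monoid_mult} \<Rightarrow> 'a"
    and m :: "'o set" and p :: nat
    and S :: "('g,'b) monoid_scheme" and \<sigma> :: "'g \<Rightarrow> 'a"
  assumes O: "standing_O m p"
    and A: "interior_alg smult S \<sigma>"
    and grp: "group S" and fin: "finite (carrier S)"
    and pgrp: "\<exists>n. card (carrier S) = p ^ n"
    and bf: "bifree smult S \<sigma>"
  shows "(\<exists>Y. is_obasis smult Y \<and> SS_invariant S \<sigma> Y \<and> Y \<subseteq> unitsA) \<longleftrightarrow>
         (\<forall>P \<phi>. subgroup P S \<longrightarrow> \<phi> \<in> fusion_hom smult m S \<sigma> P \<longrightarrow>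
                 unitsA \<inter> twfix S \<sigma> \<phi> P \<noteq> {})"
proof -
  have oa: "oalg smult" and s1: "\<sigma> \<one>\<^bsub>S\<^esub> = 1"
    and sm: "\<And>s t. s \<in> carrier S \<Longrightarrow> t \<in> carrier S \<Longrightarrow> \<sigma> (s \<otimes>\<^bsub>S\<^esub> t) = \<sigma> s * \<sigma> t"
    using A unfolding interior_alg_def by auto
  interpret M: main smult m p S \<sigma>
    by (intro main.intro setting.intro oalgebra.intro localO.intro main_axioms.intro oa O grp fin pgrp s1 sm)
  show ?thesis
  proof
    assume "\<exists>Y. is_obasis smult Y \<and> SS_invariant S \<sigma> Y \<and> Y \<subseteq> unitsA"
    then obtain Y where Y: "is_obasis smult Y" "SS_invariant S \<sigma> Y" "Y \<subseteq> unitsA" by blast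
    show "\<forall>P \<phi>. subgroup P S \<longrightarrow> \<phi> \<in> fusion_hom smult m S \<sigma> P \<longrightarrow> unitsA \<inter> twfix S \<sigma> \<phi> P \<noteq> {}"
      using M.main_fwd[OF Y] by blast
  next
    assume H: "\<forall>P \<phi>. subgroup P S \<longrightarrow> \<phi> \<in> fusion_hom smult m S \<sigma> P \<longrightarrow> unitsA \<inter> twfix S \<sigma> \<phi> P \<noteq> {}"
    obtain Y where Y: "is_obasis smult Y" "SS_invariant S \<sigma> Y"
      "\<forall>s\<in>carrier S. \<forall>y\<in>Y. \<sigma> s * y = y \<longrightarrow> s = \<one>\<^bsub>S\<^esub>"
      "\<forall>s\<in>carrier S. \<forall>y\<in>Y. y * \<sigma> s = y \<longrightarrow> s = \<one>\<^bsub>S\<^esub>"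
      using bf unfolding bifree_def by blast
    show "\<exists>Y. is_obasis smult Y \<and> SS_invariant S \<sigma> Y \<and> Y \<subseteq> unitsA"
      by (rule M.main_rev[OF Y(1,2) _ _ H]) (use Y(3,4) in blast)+
  qed
qed

end
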